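(* (a) Let $m\ge2$ and let $T$ be a triangulation of a convex $m$-gon with vertices $1,\dots,m$ in counterclockwise order, equipped with an admissible labelling $(a_t)_{t\in T}$. For each vertex $i$ let $c_i$ be the sum of the labels $a_t$ of the triangles $t$ having $i$ as a vertex. Then $(c_1,\dots,c_m)$ is a quiddity cycle over $\mathbb{Z}$. (b) Every quiddity cycle over $\mathbb{Z}$ arises as in (a) from some triangulation with an admissible labelling.
   Context: $\eta(c)=\begin{pmatrix}c&-1\\1&0\end{pmatrix}$. A quiddity cycle over $\mathbb{Z}$ is $(c_1,\dots,c_m)\in\mathbb{Z}^m$ with $\eta(c_1)\cdots\eta(c_m)=-I$. A triangulation of an $m$-gon is a subdivision into $m-2$ triangles by non-crossing diagonals; for $m=2$ it has no triangles. A labelling of a triangulation $T$ assigns an integer $a_t$ to each triangle $t\in T$. Let $d$ be the number of negative labels plus half the number of labels equal to $0$; if $d$ is an integer, the sign of the labelling is $(-1)^d$. A labelling is admissible if: (i) the set of triangles $t$ with $a_t\notin\{1,-1\}$ is a disjoint union of two-element sets $\{t_1,t_2\}$ ("squares") with $t_1,t_2$ sharing an edge and $a_{t_1}=-a_{t_2}$; (ii) its sign is $1$, i.e. $d$ is an even integer. *)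

theory Defs
  imports "HOL-Analysis.Analysis"
begin

definition eta :: "int \<Rightarrow> int^2^2" where
  "eta c = vector [vector [c, -1], vector [1, 0]]"

definition quiddity_cycle :: "int list \<Rightarrow> bool" where
  "quiddity_cycle cs \<longleftrightarrow> foldr (**) (map eta cs) (mat 1) = - mat 1"

text \<open>Triangulations of a convex polygon whose vertices, in counterclockwise order,
  are listed in vs.  A triangle is represented by its set of three vertices.
  A 2-gon has the empty triangulation; for k >= 3 vertices v_0,...,v_{k-1}, the side
  v_0 v_{k-1} lies in exactly one triangle {v_0, v_j, v_{k-1}} (0<j<k-1), and the remaining
  triangles triangulate the polygons v_0..v_j and v_j..v_{k-1}.\<close>
inductive triangulation :: "nat list \<Rightarrow> nat set set \<Rightarrow> bool" where
  two: "triangulation [u, v] {}"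
| split: "\<lbrakk> 0 < j; j < length vs - 1;
            triangulation (take (Suc j) vs) T1; triangulation (drop j vs) T2 \<rbrakk>
          \<Longrightarrow> triangulation vs (insert {hd vs, vs ! j, last vs} (T1 \<union> T2))"

definition label_d :: "nat set set \<Rightarrow> (nat set \<Rightarrow> int) \<Rightarrow> rat" where
  "label_d T a = of_nat (card {t \<in> T. a t < 0}) + of_nat (card {t \<in> T. a t = 0}) / 2"

definition squares_condition :: "nat set set \<Rightarrow> (nat set \<Rightarrow> int) \<Rightarrow> bool" where
  "squares_condition T a \<longleftrightarrow>
     (\<exists>P. \<Union>P = {t \<in> T. a t \<notin> {1, -1}}
        \<and> (\<forall>p\<in>P. \<forall>q\<in>P. p \<noteq> q \<longrightarrow> p \<inter> q = {})
        \<and> (\<forall>p\<in>P. \<exists>t1 t2. p = {t1, t2} \<and> t1 \<noteq> t2 \<and> card (t1 \<inter> t2) = 2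
                           \<and> a t1 = - a t2))"

definition admissible :: "nat set set \<Rightarrow> (nat set \<Rightarrow> int) \<Rightarrow> bool" where
  "admissible T a \<longleftrightarrow> squares_condition T a \<and> (\<exists>k::int. label_d T a = of_int (2 * k))"

definition vertex_sums :: "nat \<Rightarrow> nat set set \<Rightarrow> (nat set \<Rightarrow> int) \<Rightarrow> int list" where
  "vertex_sums m T a = map (\<lambda>i. \<Sum>t\<in>{t \<in> T. i \<in> t}. a t) [1..<m+1]"

end

theory Submission
  imports Defs
begin

definition M2 :: "int \<Rightarrow> int \<Rightarrow> int \<Rightarrow> int \<Rightarrow> int^2^2" where
  "M2 a b c d = vector [vector [a,b], vector [c,d]]"

lemma M2_comp: "M2 a b c d $ 1 $ 1 = a" "M2 a b c d $ 1 $ 2 = b" "M2 a b c d $ 2 $ 1 = c" "M2 a b c d $ 2 $ 2 = d"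
  by (simp_all add: M2_def)

lemma M2_eq_iff[simp]: "M2 a b c d = M2 e f g h \<longleftrightarrow> a=e \<and> b=f \<and> c=g \<and> d=h"
  by (metis M2_comp)

lemma M2_all: "A = M2 (A$1$1) (A$1$2) (A$2$1) (A$2$2)"
  by (simp add: vec_eq_iff forall_2 M2_comp)

lemma M2_mult[simp]: "M2 a b c d ** M2 e f g h = M2 (a*e+b*g) (a*f+b*h) (c*e+d*g) (c*f+d*h)"
  by (simp add: M2_def matrix_matrix_mult_def vec_eq_iff forall_2 sum_2)

lemma mat_M2: "mat k = M2 k 0 0 k"
  by (simp add: M2_def vec_eq_iff forall_2 mat_def)

lemma neg_M2[simp]: "- M2 a b c d = M2 (-a) (-b) (-c) (-d)"
  by (simp add: M2_def vec_eq_iff forall_2)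

lemma eta_M2: "eta c = M2 c (-1) 1 0"
  by (simp add: eta_def M2_def)

lemma in_take_nth: "x \<in> set (take k vs) \<Longrightarrow> \<exists>i<k. i < length vs \<and> vs!i = x"
  by (auto simp: in_set_conv_nth)
lemma in_drop_nth: "x \<in> set (drop k vs) \<Longrightarrow> \<exists>i\<ge>k. i < length vs \<and> vs!i = x"
  apply (auto simp: in_set_conv_nth)
  by (metis add.commute le_add2 less_diff_conv)

lemma split_facts:
  assumes j: "0 < j" "j < length vs - 1" and d: "distinct vs"
  defines "P1 \<equiv> take (Suc j) vs" and "P2 \<equiv> drop j vs"
  shows "distinct P1" "distinct P2" "hd P1 = hd vs" "last P1 = vs!j" "hd P2 = vs!j"
    "last P2 = last vs" "set P1 \<inter> set P2 = {vs!j}" "last vs \<notin> set P1" "hd vs \<notin> set P2"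
    "hd vs \<noteq> last vs" "hd vs \<noteq> vs!j" "vs!j \<noteq> last vs" "set P1 \<union> set P2 = set vs"
    "length P1 < length vs" "length P2 < length vs" "hd vs \<in> set vs" "last vs \<in> set vs" "vs!j \<in> set vs"
proof -
  have ne: "vs \<noteq> []" using j by auto
  have hdv: "hd vs = vs!0" using ne by (simp add: hd_conv_nth)
  have lastv: "last vs = vs!(length vs - 1)" using ne by (simp add: last_conv_nth)
  have t1: "P1 = take j vs @ [vs!j]" unfolding P1_def using j by (simp add: take_Suc_conv_app_nth)
  have t2: "P2 = vs!j # drop (Suc j) vs" unfolding P2_def using j by (simp add: Cons_nth_drop_Suc)
  show "distinct P1" "distinct P2" unfolding P1_def P2_def using d by auto
  show "hd P1 = hd vs" unfolding P1_def using ne by simp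
  show "last P1 = vs!j" using t1 by simp
  show "hd P2 = vs!j" using t2 by simp
  show "last P2 = last vs" unfolding P2_def using j by (simp add: last_drop)
  have disj: "set (take j vs) \<inter> set (drop (Suc j) vs) = {}"
    using d by (simp add: set_take_disj_set_drop_if_distinct)
  have "vs = take j vs @ vs!j # drop (Suc j) vs" using j by (simp add: id_take_nth_drop)
  hence "distinct (take j vs @ vs!j # drop (Suc j) vs)" using d by simp
  thus "set P1 \<inter> set P2 = {vs!j}" unfolding t1 t2 using disj by auto
  have inj: "\<And>i k. i < length vs \<Longrightarrow> k < length vs \<Longrightarrow> vs!i = vs!k \<Longrightarrow> i = k"
    using d nth_eq_iff_index_eq by blast
  have l1: "length vs - 1 < length vs" "0 < length vs" "j < length vs" using j by auto
  show "last vs \<notin> set P1"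
  proof
    assume "last vs \<in> set P1"
    hence "\<exists>i<Suc j. i < length vs \<and> vs!i = last vs" using in_take_nth[of "last vs" "Suc j" vs] unfolding P1_def by blast
    then obtain i where "i < Suc j" "i < length vs" "vs!i = last vs" by blast
    thus False using inj[of i "length vs - 1"] lastv j l1 by auto
  qed
  show "hd vs \<notin> set P2"
  proof
    assume "hd vs \<in> set P2"
    hence "\<exists>i\<ge>j. i < length vs \<and> vs!i = hd vs" using in_drop_nth[of "hd vs" j vs] unfolding P2_def by blast
    then obtain i where "i \<ge> j" "i < length vs" "vs!i = hd vs" by blast
    thus False using inj[of i 0] hdv j l1 by auto
  qed
  show "hd vs \<noteq> last vs" unfolding hdv lastv using inj[OF l1(2) l1(1)] j by linarith
  show "hd vs \<noteq> vs!j" unfolding hdv using inj[OF l1(2) l1(3)] j by linarith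
  show "vs!j \<noteq> last vs" unfolding lastv using inj[OF l1(3) l1(1)] j by linarith
  show "set P1 \<union> set P2 = set vs"
  proof
    show "set P1 \<union> set P2 \<subseteq> set vs" unfolding P1_def P2_def by (meson Un_least set_drop_subset set_take_subset)
    have "set vs = set (take j vs) \<union> set (drop j vs)" by (metis append_take_drop_id set_append)
    thus "set vs \<subseteq> set P1 \<union> set P2" unfolding t1 P2_def by auto
  qed
  show "length P1 < length vs" "length P2 < length vs" unfolding P1_def P2_def using j by auto
  show "hd vs \<in> set vs" "last vs \<in> set vs" "vs!j \<in> set vs" using ne j by auto
qed

lemma tri_basic:
  assumes "triangulation vs T" "distinct vs"
  shows "2 \<le> length vs \<and> finite T \<and> (\<forall>t\<in>T. t \<subseteq> set vs \<and> card t = 3)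
    \<and> (\<forall>t\<in>T. \<forall>t'\<in>T. hd vs \<in> t \<longrightarrow> last vs \<in> t \<longrightarrow> hd vs \<in> t' \<longrightarrow> last vs \<in> t' \<longrightarrow> t = t')"
  using assms
proof (induction rule: triangulation.induct)
  case (two u v)
  then show ?case by simp
next
  case (split j vs T1 T2)
  note sf = split_facts[OF split.hyps(1,2) split.prems]
  have IH1: "2 \<le> length (take (Suc j) vs) \<and> finite T1 \<and> (\<forall>t\<in>T1. t \<subseteq> set (take (Suc j) vs) \<and> card t = 3)"
    using split.IH(1) sf(1) by blast
  have IH2: "2 \<le> length (drop j vs) \<and> finite T2 \<and> (\<forall>t\<in>T2. t \<subseteq> set (drop j vs) \<and> card t = 3)"
    using split.IH(2) sf(2) by blast
  have c3: "card {hd vs, vs ! j, last vs} = 3" using sf(10,11,12) by auto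
  have ro: "\<forall>t\<in>T1 \<union> T2. \<not> (hd vs \<in> t \<and> last vs \<in> t)" using IH1 IH2 sf(8,9) by blast
  show ?case
  proof (intro conjI)
    show "2 \<le> length vs" using split.hyps(2) by auto
    show "finite (insert {hd vs, vs ! j, last vs} (T1 \<union> T2))" using IH1 IH2 by simp
    show "\<forall>t\<in>insert {hd vs, vs ! j, last vs} (T1 \<union> T2). t \<subseteq> set vs \<and> card t = 3"
      using IH1 IH2 c3 sf(13,16,17,18) by blast
    show "\<forall>t\<in>insert {hd vs, vs ! j, last vs} (T1 \<union> T2). \<forall>t'\<in>insert {hd vs, vs ! j, last vs} (T1 \<union> T2).
       hd vs \<in> t \<longrightarrow> last vs \<in> t \<longrightarrow> hd vs \<in> t' \<longrightarrow> last vs \<in> t' \<longrightarrow> t = t'"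
      using ro by blast
  qed
qed

definition csum :: "nat set set \<Rightarrow> (nat set \<Rightarrow> int) \<Rightarrow> nat \<Rightarrow> int" where
  "csum T a v = (\<Sum>t\<in>{t\<in>T. v\<in>t}. a t)"
definition prodm :: "(int^2^2) list \<Rightarrow> int^2^2" where
  "prodm xs = foldr (**) xs (mat 1)"
definition Om :: "nat list \<Rightarrow> nat set set \<Rightarrow> (nat set \<Rightarrow> int) \<Rightarrow> int^2^2" where
  "Om vs T a = prodm (map (\<lambda>v. eta (csum T a v)) vs)"

lemma prodm_Nil[simp]: "prodm [] = mat 1" by (simp add: prodm_def)
lemma prodm_Cons[simp]: "prodm (x#xs) = x ** prodm xs" by (simp add: prodm_def)
lemma prodm_append[simp]: "prodm (xs@ys) = prodm xs ** prodm ys"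
  by (induction xs) (auto simp: matrix_mul_assoc)

lemma csum_insert: "finite T \<Longrightarrow> t \<notin> T \<Longrightarrow> csum (insert t T) a v = (if v\<in>t then a t else 0) + csum T a v"
  unfolding csum_def by (cases "v \<in> t") (auto simp: insert_compr[symmetric] Collect_conj_eq)

lemma csum_union: "finite T1 \<Longrightarrow> finite T2 \<Longrightarrow> T1 \<inter> T2 = {} \<Longrightarrow> csum (T1 \<union> T2) a v = csum T1 a v + csum T2 a v"
proof -
  assume "finite T1" "finite T2" "T1 \<inter> T2 = {}"
  moreover have "{t\<in>T1 \<union> T2. v\<in>t} = {t\<in>T1. v\<in>t} \<union> {t\<in>T2. v\<in>t}" by auto
  ultimately show ?thesis unfolding csum_def by (simp add: sum.union_disjoint disjoint_iff)
qed

lemma csum_zero: "\<forall>t\<in>T. v \<notin> t \<Longrightarrow> csum T a v = 0"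
proof -
  assume "\<forall>t\<in>T. v \<notin> t"
  hence e: "{t\<in>T. v\<in>t} = {}" by auto
  show ?thesis unfolding csum_def e by simp
qed

lemma csum_cong: "\<forall>t\<in>T. a t = b t \<Longrightarrow> csum T a v = csum T b v"
  unfolding csum_def by (rule sum.cong) auto

lemma recur_id: "eta (x + c1) ** X ** eta (x + d1 + d2) ** Y ** eta (x + e2) =
   eta x ** eta 0 ** (eta c1 ** X ** eta d1) ** eta 0 ** eta x ** eta 0 ** (eta d2 ** Y ** eta e2) ** eta 0 ** eta x"
proof -
  obtain p q r s where X: "X = M2 p q r s" using M2_all by blast
  obtain p' q' r' s' where Y: "Y = M2 p' q' r' s'" using M2_all by blast
  show ?thesis unfolding X Y eta_M2 by (simp add: algebra_simps)
qed

lemma three_split: "2 \<le> length xs \<Longrightarrow> xs = hd xs # butlast (tl xs) @ [last xs]"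
proof (cases xs)
  case (Cons y ys)
  assume "2 \<le> length xs"
  hence "ys \<noteq> []" using Cons by auto
  thus ?thesis using Cons by simp
qed simp

lemma split_disj:
  assumes j: "0 < j" "j < length vs - 1" and d: "distinct vs"
    and t1: "triangulation (take (Suc j) vs) T1" and t2: "triangulation (drop j vs) T2"
  shows "{hd vs, vs!j, last vs} \<notin> T1 \<union> T2" "T1 \<inter> T2 = {}" "finite T1" "finite T2"
    "\<forall>t\<in>T1. t \<subseteq> set (take (Suc j) vs)" "\<forall>t\<in>T2. t \<subseteq> set (drop j vs)"
proof -
  note sf = split_facts[OF j d]
  have IH1: "finite T1 \<and> (\<forall>t\<in>T1. t \<subseteq> set (take (Suc j) vs) \<and> card t = 3)"
    using tri_basic[OF t1 sf(1)] by blast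
  have IH2: "finite T2 \<and> (\<forall>t\<in>T2. t \<subseteq> set (drop j vs) \<and> card t = 3)"
    using tri_basic[OF t2 sf(2)] by blast
  show "{hd vs, vs!j, last vs} \<notin> T1 \<union> T2"
  proof
    assume "{hd vs, vs!j, last vs} \<in> T1 \<union> T2"
    moreover have "{hd vs, vs!j, last vs} \<notin> T1"
    proof
      assume "{hd vs, vs!j, last vs} \<in> T1"
      moreover have "\<forall>t\<in>T1. t \<subseteq> set (take (Suc j) vs)" using IH1 by simp
      ultimately have "{hd vs, vs!j, last vs} \<subseteq> set (take (Suc j) vs)" by (rule bspec[rotated])
      thus False using sf(8) by simp
    qed
    moreover have "{hd vs, vs!j, last vs} \<notin> T2"
    proof
      assume "{hd vs, vs!j, last vs} \<in> T2"
      moreover have "\<forall>t\<in>T2. t \<subseteq> set (drop j vs)" using IH2 by simp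
      ultimately have "{hd vs, vs!j, last vs} \<subseteq> set (drop j vs)" by (rule bspec[rotated])
      thus False using sf(9) by simp
    qed
    ultimately show False by blast
  qed
  show "T1 \<inter> T2 = {}"
  proof (rule ccontr)
    assume "T1 \<inter> T2 \<noteq> {}"
    then obtain t where "t \<in> T1" "t \<in> T2" by blast
    hence "t \<subseteq> {vs!j}" "card t = 3" using IH1 IH2 sf(7) by blast+
    thus False using card_mono[of "{vs!j}" t] by simp
  qed
  show "finite T1" "finite T2" "\<forall>t\<in>T1. t \<subseteq> set (take (Suc j) vs)" "\<forall>t\<in>T2. t \<subseteq> set (drop j vs)"
    using IH1 IH2 by auto
qed

lemma Om_split:
  assumes j: "0 < j" "j < length vs - 1" and d: "distinct vs"
    and t1: "triangulation (take (Suc j) vs) T1" and t2: "triangulation (drop j vs) T2"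
  shows "Om vs (insert {hd vs, vs!j, last vs} (T1 \<union> T2)) a =
    eta (a {hd vs, vs!j, last vs}) ** eta 0 ** Om (take (Suc j) vs) T1 a ** eta 0 ** eta (a {hd vs, vs!j, last vs})
     ** eta 0 ** Om (drop j vs) T2 a ** eta 0 ** eta (a {hd vs, vs!j, last vs})"
proof -
  note sf = split_facts[OF j d]
  note sd = split_disj[OF j d t1 t2]
  define P1 where "P1 = take (Suc j) vs"
  define P2 where "P2 = drop j vs"
  define t0 where "t0 = {hd vs, vs!j, last vs}"
  define x where "x = a t0"
  define T where "T = insert t0 (T1 \<union> T2)"
  define A where "A = butlast (tl P1)"
  define B where "B = butlast (tl P2)"
  have l1: "2 \<le> length P1" "2 \<le> length P2" using tri_basic[OF t1 sf(1)] tri_basic[OF t2 sf(2)] P1_def P2_def by auto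
  have eP1: "P1 = hd vs # A @ [vs!j]" using three_split[OF l1(1)] sf(3,4) unfolding A_def P1_def by simp
  have eP2: "P2 = vs!j # B @ [last vs]" using three_split[OF l1(2)] sf(5,6) unfolding B_def P2_def by simp
  have "P1 = take j vs @ [vs!j]" unfolding P1_def using j by (simp add: take_Suc_conv_app_nth)
  hence tj: "take j vs = hd vs # A" using eP1 by simp
  have evs: "vs = hd vs # A @ vs!j # B @ [last vs]"
    using append_take_drop_id[of j vs] tj eP2 unfolding P2_def by simp
  have dP1: "distinct (hd vs # A @ [vs!j])" using sf(1) eP1 P1_def by simp
  have dP2: "distinct (vs!j # B @ [last vs])" using sf(2) eP2 P2_def by simp
  have fin: "finite (T1 \<union> T2)" using sd by simp
  have cT: "csum T a v = (if v \<in> t0 then x else 0) + csum T1 a v + csum T2 a v" for v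
    unfolding T_def x_def using csum_insert[OF fin sd(1)[folded t0_def]] csum_union[OF sd(3,4,2)] by simp
  have z1: "csum T1 a v = 0" if "v \<notin> set P1" for v using sd(5) that P1_def csum_zero by blast
  have z2: "csum T2 a v = 0" if "v \<notin> set P2" for v using sd(6) that P2_def csum_zero by blast
  have mA: "map (\<lambda>v. eta (csum T a v)) A = map (\<lambda>v. eta (csum T1 a v)) A"
  proof (rule map_cong[OF refl])
    fix v assume v: "v \<in> set A"
    hence "v \<in> set P1" "v \<noteq> hd vs" "v \<noteq> vs!j" using eP1 dP1 by auto
    hence "v \<notin> set P2" "v \<noteq> last vs" using sf(7,8) P1_def P2_def by auto
    thus "eta (csum T a v) = eta (csum T1 a v)" using cT[of v] z2[of v] \<open>v \<noteq> hd vs\<close> \<open>v \<noteq> vs!j\<close>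
      unfolding t0_def by simp
  qed
  have mB: "map (\<lambda>v. eta (csum T a v)) B = map (\<lambda>v. eta (csum T2 a v)) B"
  proof (rule map_cong[OF refl])
    fix v assume v: "v \<in> set B"
    hence "v \<in> set P2" "v \<noteq> last vs" "v \<noteq> vs!j" using eP2 dP2 by auto
    hence "v \<notin> set P1" "v \<noteq> hd vs" using sf(7,9) P1_def P2_def by auto
    thus "eta (csum T a v) = eta (csum T2 a v)" using cT[of v] z1[of v] \<open>v \<noteq> last vs\<close> \<open>v \<noteq> vs!j\<close>
      unfolding t0_def by simp
  qed
  have c0: "csum T a (hd vs) = x + csum T1 a (hd vs)" using cT z2 sf(9) P2_def t0_def by simp
  have cj: "csum T a (vs!j) = x + csum T1 a (vs!j) + csum T2 a (vs!j)" using cT t0_def by simp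
  have cn: "csum T a (last vs) = x + csum T2 a (last vs)" using cT z1 sf(8) P1_def t0_def by simp
  define X where "X = prodm (map (\<lambda>v. eta (csum T1 a v)) A)"
  define Y where "Y = prodm (map (\<lambda>v. eta (csum T2 a v)) B)"
  have "Om vs T a = eta (x + csum T1 a (hd vs)) ** X ** eta (x + csum T1 a (vs!j) + csum T2 a (vs!j)) ** Y ** eta (x + csum T2 a (last vs))"
    apply (subst evs) unfolding Om_def X_def Y_def
    by (simp add: matrix_mul_assoc mA mB c0 cj cn)
  also have "\<dots> = eta x ** eta 0 ** (eta (csum T1 a (hd vs)) ** X ** eta (csum T1 a (vs!j))) ** eta 0 ** eta x ** eta 0 **
     (eta (csum T2 a (vs!j)) ** Y ** eta (csum T2 a (last vs))) ** eta 0 ** eta x" by (rule recur_id)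
  also have "eta (csum T1 a (hd vs)) ** X ** eta (csum T1 a (vs!j)) = Om P1 T1 a"
    unfolding Om_def X_def by (subst eP1) (simp add: matrix_mul_assoc)
  also have "eta (csum T2 a (vs!j)) ** Y ** eta (csum T2 a (last vs)) = Om P2 T2 a"
    unfolding Om_def Y_def by (subst eP2) (simp add: matrix_mul_assoc)
  finally show ?thesis unfolding T_def x_def t0_def P1_def P2_def .
qed

definition wt :: "int \<Rightarrow> nat" where "wt x = (if x < 0 then 2 else if x = 0 then 1 else 0)"
definition WW :: "nat set set \<Rightarrow> (nat set \<Rightarrow> int) \<Rightarrow> nat" where "WW T a = (\<Sum>t\<in>T. wt (a t))"
definition Sg :: "nat \<Rightarrow> int" where "Sg k = (-1)^(k div 2)"
definition good :: "nat set set set \<Rightarrow> (nat set \<Rightarrow> int) \<Rightarrow> bool" where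
  "good P a \<longleftrightarrow> (\<forall>p\<in>P. \<exists>t1 t2. p = {t1,t2} \<and> t1 \<noteq> t2 \<and> card (t1\<inter>t2) = 2 \<and> a t1 = - a t2)
     \<and> (\<forall>p\<in>P. \<forall>q\<in>P. p \<noteq> q \<longrightarrow> p \<inter> q = {})"

lemma wt_neg: "wt x + wt (-x) = 2" by (simp add: wt_def)
lemma Sg_add: "even a \<Longrightarrow> even b \<Longrightarrow> Sg (a+b) = Sg a * Sg b"
  unfolding Sg_def by (elim evenE) (simp add: power_add)
lemma Sg_2: "Sg (a+2) = - Sg a" "Sg (2+a) = - Sg a" unfolding Sg_def by simp_all

lemma WW_insert: "finite T \<Longrightarrow> t \<notin> T \<Longrightarrow> WW (insert t T) a = wt (a t) + WW T a"
  unfolding WW_def by simp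
lemma WW_union: "finite T1 \<Longrightarrow> finite T2 \<Longrightarrow> T1 \<inter> T2 = {} \<Longrightarrow> WW (T1 \<union> T2) a = WW T1 a + WW T2 a"
  unfolding WW_def by (simp add: sum.union_disjoint)
lemma WW_remove: "finite T \<Longrightarrow> r \<in> T \<Longrightarrow> WW T a = wt (a r) + WW (T - {r}) a"
  unfolding WW_def by (simp add: sum.remove)

lemma matA: "eta x ** eta 0 ** mat s1 ** eta 0 ** eta x ** eta 0 ** mat s2 ** eta 0 ** eta x
   = mat (s1 * s2) ** (eta x ** eta x ** eta x)"
  unfolding mat_M2 eta_M2 by (simp add: algebra_simps)
lemma eta1: "eta 1 ** eta 1 ** eta 1 = mat (-1)" "eta (-1) ** eta (-1) ** eta (-1) = mat 1"
  unfolding mat_M2 eta_M2 by simp_all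
lemma matB: "eta x ** eta 0 ** (mat s1 ** (eta (-x) ** eta (-x) ** eta (-x))) ** eta 0 ** eta x ** eta 0 ** mat s2 ** eta 0 ** eta x
   = mat (-(s1 * s2))"
  unfolding mat_M2 eta_M2 by (simp add: algebra_simps)
lemma matC: "eta x ** eta 0 ** mat s1 ** eta 0 ** eta x ** eta 0 ** (mat s2 ** (eta (-x) ** eta (-x) ** eta (-x))) ** eta 0 ** eta x
   = mat (-(s1 * s2))"
  unfolding mat_M2 eta_M2 by (simp add: algebra_simps)

lemma cross1:
  assumes "finite s" "s \<subseteq> S" "w \<notin> S" "card (s \<inter> {u,v,w}) = 2"
  shows "u \<in> s \<and> v \<in> s"
proof -
  have sub: "s \<inter> {u,v,w} \<subseteq> {u,v}" using assms(2,3) by auto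
  have "card (s \<inter> {u,v,w}) \<le> card {u,v}" by (rule card_mono[OF _ sub]) simp
  moreover have "card {u,v} \<le> 2" by (simp add: card_insert_le_m1)
  ultimately have "card {u,v} = card (s \<inter> {u,v,w})" using assms(4) by simp
  hence "s \<inter> {u,v,w} = {u,v}" using card_subset_eq[OF _ sub] by simp
  thus ?thesis by auto
qed

lemma cross2:
  assumes "s \<subseteq> S1" "s' \<subseteq> S2" "S1 \<inter> S2 = {z}" "card (s \<inter> s') = 2"
  shows False
proof -
  have "s \<inter> s' \<subseteq> {z}" using assms by auto
  hence "card (s \<inter> s') \<le> 1" using card_mono[of "{z}" "s \<inter> s'"] by simp
  thus False using assms(4) by simp
qed

lemma main_a:
  assumes "triangulation vs T" "distinct vs" "good P a"
    "\<forall>t\<in>T. t \<notin> \<Union>P \<longrightarrow> a t \<in> {1,-1}"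
    "\<forall>p\<in>P. p \<inter> T \<noteq> {} \<longrightarrow> p \<subseteq> T \<or> (\<exists>r t'. p = {r,t'} \<and> r \<in> T \<and> hd vs \<in> r \<and> last vs \<in> r \<and> t' \<notin> T)"
  shows "((\<forall>p\<in>P. p \<inter> T \<noteq> {} \<longrightarrow> p \<subseteq> T) \<longrightarrow> even (WW T a) \<and> Om vs T a = mat (- Sg (WW T a))) \<and>
    (\<forall>r t'. {r,t'} \<in> P \<longrightarrow> r \<in> T \<longrightarrow> t' \<notin> T \<longrightarrow>
       even (WW (T-{r}) a) \<and> Om vs T a = mat (Sg (WW (T-{r}) a)) ** (eta (a r) ** eta (a r) ** eta (a r)))"
  using assms(1,2,4,5)
proof (induction rule: triangulation.induct)
  case (two u v)
  have "Om [u,v] {} a = mat (-1)" unfolding Om_def csum_def by (simp add: eta_M2 mat_M2)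
  then show ?case by (simp add: WW_def Sg_def)
next
  case (split j vs T1 T2)
  define t0 where "t0 = {hd vs, vs!j, last vs}"
  define T where "T = insert t0 (T1 \<union> T2)"
  define x where "x = a t0"
  define P1 where "P1 = take (Suc j) vs"
  define P2 where "P2 = drop j vs"
  note sf = split_facts[OF split.hyps(1,2) split.prems(1), folded P1_def P2_def]
  note sd = split_disj[OF split.hyps(1,2) split.prems(1) split.hyps(3,4), folded P1_def P2_def t0_def]
  have triT: "triangulation vs T" unfolding T_def t0_def using split.hyps by (rule triangulation.split)
  note tbT = tri_basic[OF triT split.prems(1)]
  have t0T: "t0 \<in> T" unfolding T_def by simp
  have ht0: "hd vs \<in> t0" "last vs \<in> t0" unfolding t0_def by auto
  have root: "r = t0" if "r \<in> T" "hd vs \<in> r" "last vs \<in> r" for r using tbT that t0T ht0 by blast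
  have H1: "\<forall>t\<in>T. t \<notin> \<Union>P \<longrightarrow> a t \<in> {1,-1}" using split.prems(2) T_def t0_def by simp
  have H3: "\<forall>p\<in>P. p \<inter> T \<noteq> {} \<longrightarrow> p \<subseteq> T \<or> (\<exists>r t'. p = {r,t'} \<and> r \<in> T \<and> hd vs \<in> r \<and> last vs \<in> r \<and> t' \<notin> T)"
    using split.prems(3) T_def t0_def by simp
  have gd: "\<forall>p\<in>P. \<exists>t1 t2. p = {t1,t2} \<and> t1 \<noteq> t2 \<and> card (t1\<inter>t2) = 2 \<and> a t1 = - a t2"
    "\<forall>p\<in>P. \<forall>q\<in>P. p \<noteq> q \<longrightarrow> p \<inter> q = {}" using assms(3) unfolding good_def by auto
  have fT: "finite T" using tbT by simp
  have T1T: "T1 \<subseteq> T" "T2 \<subseteq> T" unfolding T_def by auto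
  have t0n: "t0 \<notin> T1" "t0 \<notin> T2" using sd(1) by auto
  have G: "t0 \<in> q" if qq: "q \<in> P" "q \<inter> T \<noteq> {}" "\<not> q \<subseteq> T" for q
  proof -
    have "q \<subseteq> T \<or> (\<exists>r t'. q = {r,t'} \<and> r \<in> T \<and> hd vs \<in> r \<and> last vs \<in> r \<and> t' \<notin> T)"
      using H3 qq(1,2) by simp
    then obtain r t' where "q = {r,t'}" "r \<in> T" "hd vs \<in> r" "last vs \<in> r" using qq(3) by auto
    thus ?thesis using root[of r] by simp
  qed
  have A1: "\<exists>s\<in>T1. p = {s,t0} \<and> hd P1 \<in> s \<and> last P1 \<in> s" if pp: "p \<in> P" "p \<inter> T1 \<noteq> {}" "\<not> p \<subseteq> T1" for p
  proof -
    obtain s where s: "s \<in> p" "s \<in> T1" using pp by blast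
    have "\<exists>t1 t2. p = {t1,t2} \<and> t1 \<noteq> t2 \<and> card (t1\<inter>t2) = 2 \<and> a t1 = - a t2" by (rule bspec[OF gd(1) pp(1)])
    then obtain t1 t2 where p: "p = {t1,t2}" "t1 \<noteq> t2" "card (t1\<inter>t2) = 2" by auto
    have "\<exists>s'. p = {s,s'} \<and> card (s \<inter> s') = 2 \<and> s' \<notin> T1"
    proof (cases "s = t1")
      case True
      hence "t2 \<notin> T1" using p s pp(3) by auto
      thus ?thesis using True p by auto
    next
      case False hence "s = t2" using p s by auto
      moreover hence "t1 \<notin> T1" using p s pp(3) by auto
      ultimately show ?thesis using p by (auto simp: Int_commute insert_commute)
    qed
    then obtain s' where s': "p = {s,s'}" "card (s \<inter> s') = 2" "s' \<notin> T1" by auto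
    have "s' = t0"
    proof (rule ccontr)
      assume ne: "s' \<noteq> t0"
      have "p \<subseteq> T"
      proof (rule ccontr)
        assume "\<not> p \<subseteq> T"
        hence "t0 \<in> p" using G[OF pp(1)] s T1T by blast
        thus False using s' ne t0n s by auto
      qed
      hence "s' \<in> T2" using s' ne unfolding T_def by auto
      moreover have "s \<subseteq> set P1" using sd(5) s by blast
      ultimately show False using cross2[OF _ _ sf(7) s'(2)] sd(6) by blast
    qed
    moreover have "hd vs \<in> s \<and> vs!j \<in> s"
      using cross1[of s "set P1" "last vs" "hd vs" "vs!j"] sd(3,5) s s' \<open>s' = t0\<close> sf(8)
      unfolding t0_def by (meson finite_subset finite_set)
    ultimately show ?thesis using s s' sf(3,4) by auto
  qed
  have A2: "\<exists>s\<in>T2. p = {s,t0} \<and> hd P2 \<in> s \<and> last P2 \<in> s" if pp: "p \<in> P" "p \<inter> T2 \<noteq> {}" "\<not> p \<subseteq> T2" for p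
  proof -
    obtain s where s: "s \<in> p" "s \<in> T2" using pp by blast
    have "\<exists>t1 t2. p = {t1,t2} \<and> t1 \<noteq> t2 \<and> card (t1\<inter>t2) = 2 \<and> a t1 = - a t2" by (rule bspec[OF gd(1) pp(1)])
    then obtain t1 t2 where p: "p = {t1,t2}" "t1 \<noteq> t2" "card (t1\<inter>t2) = 2" by auto
    have "\<exists>s'. p = {s,s'} \<and> card (s \<inter> s') = 2 \<and> s' \<notin> T2"
    proof (cases "s = t1")
      case True
      hence "t2 \<notin> T2" using p s pp(3) by auto
      thus ?thesis using True p by auto
    next
      case False hence "s = t2" using p s by auto
      moreover hence "t1 \<notin> T2" using p s pp(3) by auto
      ultimately show ?thesis using p by (auto simp: Int_commute insert_commute)
    qed
    then obtain s' where s': "p = {s,s'}" "card (s \<inter> s') = 2" "s' \<notin> T2" by auto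
    have "s' = t0"
    proof (rule ccontr)
      assume ne: "s' \<noteq> t0"
      have "p \<subseteq> T"
      proof (rule ccontr)
        assume "\<not> p \<subseteq> T"
        hence "t0 \<in> p" using G[OF pp(1)] s T1T by blast
        thus False using s' ne t0n s by auto
      qed
      hence "s' \<in> T1" using s' ne unfolding T_def by auto
      moreover have "s \<subseteq> set P2" using sd(6) s by blast
      ultimately show False using cross2[OF _ _ sf(7) s'(2)[unfolded Int_commute[of s]]] sd(5) by blast
    qed
    moreover have "vs!j \<in> s \<and> last vs \<in> s"
      using cross1[of s "set P2" "hd vs" "vs!j" "last vs"] sd(4,6) s s' \<open>s' = t0\<close> sf(9)
      unfolding t0_def by (metis finite_subset finite_set insert_commute)
    ultimately show ?thesis using s s' sf(5,6) by auto
  qed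
  have C1: "((\<forall>p\<in>P. p \<inter> T1 \<noteq> {} \<longrightarrow> p \<subseteq> T1) \<longrightarrow> even (WW T1 a) \<and> Om P1 T1 a = mat (- Sg (WW T1 a))) \<and>
    (\<forall>r t'. {r,t'} \<in> P \<longrightarrow> r \<in> T1 \<longrightarrow> t' \<notin> T1 \<longrightarrow>
       even (WW (T1-{r}) a) \<and> Om P1 T1 a = mat (Sg (WW (T1-{r}) a)) ** (eta (a r) ** eta (a r) ** eta (a r)))"
    unfolding P1_def
  proof (rule split.IH(1))
    show "distinct (take (Suc j) vs)" using sf(1) P1_def by simp
    show "\<forall>t\<in>T1. t \<notin> \<Union>P \<longrightarrow> a t \<in> {1,-1}" using H1 T1T by blast
    show "\<forall>p\<in>P. p \<inter> T1 \<noteq> {} \<longrightarrow> p \<subseteq> T1 \<or> (\<exists>r t'. p = {r,t'} \<and> r \<in> T1 \<and> hd (take (Suc j) vs) \<in> r \<and> last (take (Suc j) vs) \<in> r \<and> t' \<notin> T1)"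
      using A1 t0n unfolding P1_def by metis
  qed
  have C2: "((\<forall>p\<in>P. p \<inter> T2 \<noteq> {} \<longrightarrow> p \<subseteq> T2) \<longrightarrow> even (WW T2 a) \<and> Om P2 T2 a = mat (- Sg (WW T2 a))) \<and>
    (\<forall>r t'. {r,t'} \<in> P \<longrightarrow> r \<in> T2 \<longrightarrow> t' \<notin> T2 \<longrightarrow>
       even (WW (T2-{r}) a) \<and> Om P2 T2 a = mat (Sg (WW (T2-{r}) a)) ** (eta (a r) ** eta (a r) ** eta (a r)))"
    unfolding P2_def
  proof (rule split.IH(2))
    show "distinct (drop j vs)" using sf(2) P2_def by simp
    show "\<forall>t\<in>T2. t \<notin> \<Union>P \<longrightarrow> a t \<in> {1,-1}" using H1 T1T by blast
    show "\<forall>p\<in>P. p \<inter> T2 \<noteq> {} \<longrightarrow> p \<subseteq> T2 \<or> (\<exists>r t'. p = {r,t'} \<and> r \<in> T2 \<and> hd (drop j vs) \<in> r \<and> last (drop j vs) \<in> r \<and> t' \<notin> T2)"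
      using A2 t0n unfolding P2_def by metis
  qed
  have OmT: "Om vs T a = eta x ** eta 0 ** Om P1 T1 a ** eta 0 ** eta x ** eta 0 ** Om P2 T2 a ** eta 0 ** eta x"
    unfolding T_def t0_def x_def P1_def P2_def by (rule Om_split[OF split.hyps(1,2) split.prems(1) split.hyps(3,4)])
  have WT: "WW T a = wt x + WW T1 a + WW T2 a"
    unfolding T_def x_def using WW_insert[of "T1 \<union> T2" t0 a] WW_union[OF sd(3,4,2), of a] sd(1,3,4) t0_def by simp
  have matm: "(mat k :: int^2^2) ** mat l = mat (k * l)" for k l :: int unfolding mat_M2 by simp
  have X1: "t0 \<in> \<Union>P" if "p \<in> P" "p \<inter> T1 \<noteq> {}" "\<not> p \<subseteq> T1" for p
    using A1[OF that] that(1) by auto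
  have X2: "t0 \<in> \<Union>P" if "p \<in> P" "p \<inter> T2 \<noteq> {}" "\<not> p \<subseteq> T2" for p
    using A2[OF that] that(1) by auto
  have main: "((\<forall>p\<in>P. p \<inter> T \<noteq> {} \<longrightarrow> p \<subseteq> T) \<longrightarrow> even (WW T a) \<and> Om vs T a = mat (- Sg (WW T a))) \<and>
    (\<forall>r t'. {r,t'} \<in> P \<longrightarrow> r \<in> T \<longrightarrow> t' \<notin> T \<longrightarrow>
       even (WW (T-{r}) a) \<and> Om vs T a = mat (Sg (WW (T-{r}) a)) ** (eta (a r) ** eta (a r) ** eta (a r)))"
  proof (cases "t0 \<in> \<Union>P")
    case False
    have cl1: "\<forall>p\<in>P. p \<inter> T1 \<noteq> {} \<longrightarrow> p \<subseteq> T1" using X1 False by blast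
    have cl2: "\<forall>p\<in>P. p \<inter> T2 \<noteq> {} \<longrightarrow> p \<subseteq> T2" using X2 False by blast
    have E1: "even (WW T1 a)" "Om P1 T1 a = mat (- Sg (WW T1 a))" using C1 cl1 by auto
    have E2: "even (WW T2 a)" "Om P2 T2 a = mat (- Sg (WW T2 a))" using C2 cl2 by auto
    have xpm: "x = 1 \<or> x = -1" using H1 t0T False x_def by auto
    have OmT': "Om vs T a = mat (Sg (WW T1 a) * Sg (WW T2 a)) ** (eta x ** eta x ** eta x)"
      unfolding OmT E1(2) E2(2) matA by simp
    have part1: "even (WW T a) \<and> Om vs T a = mat (- Sg (WW T a))"
    proof (cases "x = 1")
      case True
      thus ?thesis using OmT' WT E1(1) E2(1) Sg_add[OF E1(1) E2(1)] by (simp add: eta1 matm wt_def)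
    next
      case False
      hence "x = -1" using xpm by simp
      moreover have "Sg (2 + (WW T1 a + WW T2 a)) = - Sg (WW T1 a + WW T2 a)" by (rule Sg_2)
      ultimately show ?thesis using OmT' WT E1(1) E2(1) Sg_add[OF E1(1) E2(1)] by (simp add: eta1 matm wt_def)
    qed
    have part2: "\<forall>r t'. {r,t'} \<in> P \<longrightarrow> r \<in> T \<longrightarrow> t' \<notin> T \<longrightarrow> False"
    proof (intro allI impI)
      fix r t' assume "{r,t'} \<in> P" "r \<in> T" "t' \<notin> T"
      hence "t0 \<in> {r,t'}" using G[of "{r,t'}"] by auto
      thus False using \<open>{r,t'} \<in> P\<close> False by blast
    qed
    show ?thesis using part1 part2 by blast
  next
    case True
    then obtain p0 where p0: "p0 \<in> P" "t0 \<in> p0" by blast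
    have "\<exists>t1 t2. p0 = {t1,t2} \<and> t1 \<noteq> t2 \<and> card (t1\<inter>t2) = 2 \<and> a t1 = - a t2" by (rule bspec[OF gd(1) p0(1)])
    then obtain t1 t2 where tt: "p0 = {t1,t2}" "t1 \<noteq> t2" "a t1 = - a t2" by auto
    have "\<exists>t'. p0 = {t0,t'} \<and> t' \<noteq> t0 \<and> a t' = - x"
    proof (cases "t0 = t1")
      case True thus ?thesis using tt x_def by (intro exI[of _ t2]) auto
    next
      case False hence "t0 = t2" using tt p0 by auto
      thus ?thesis using tt x_def by (intro exI[of _ t1]) auto
    qed
    then obtain t' where t': "p0 = {t0,t'}" "t' \<noteq> t0" "a t' = - x" by auto
    have uq: "q = p0" if "q \<in> P" "t0 \<in> q" for q using gd(2) that p0 by blast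
    have Y1: "t' \<in> T1" if pp: "p \<in> P" "p \<inter> T1 \<noteq> {}" "\<not> p \<subseteq> T1" for p
    proof -
      obtain s where "s \<in> T1" "p = {s,t0}" using A1[OF pp] by blast
      moreover hence "p = p0" using uq pp(1) by auto
      ultimately show ?thesis using t' t0n by (metis doubleton_eq_iff)
    qed
    have Y2: "t' \<in> T2" if pp: "p \<in> P" "p \<inter> T2 \<noteq> {}" "\<not> p \<subseteq> T2" for p
    proof -
      obtain s where "s \<in> T2" "p = {s,t0}" using A2[OF pp] by blast
      moreover hence "p = p0" using uq pp(1) by auto
      ultimately show ?thesis using t' t0n by (metis doubleton_eq_iff)
    qed
    have part2gen: "r = t0 \<and> t'' = t'" if "{r,t''} \<in> P" "r \<in> T" "t'' \<notin> T" for r t''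
    proof -
      have "t0 \<in> {r,t''}" using G[OF that(1)] that(2,3) by auto
      hence "{r,t''} = p0" using uq that(1) by blast
      thus ?thesis using t' that t0T by (metis doubleton_eq_iff)
    qed
    consider (c1) "t' \<in> T1" | (c2) "t' \<in> T2" | (c3) "t' \<notin> T1" "t' \<notin> T2" by blast
    then show ?thesis
    proof cases
      case c1
      hence "t' \<notin> T2" using sd(2) by blast
      hence cl2: "\<forall>p\<in>P. p \<inter> T2 \<noteq> {} \<longrightarrow> p \<subseteq> T2" using Y2 by blast
      have E2: "even (WW T2 a)" "Om P2 T2 a = mat (- Sg (WW T2 a))" using C2 cl2 by auto
      have "{t',t0} \<in> P" using p0 t' by (simp add: insert_commute)
      hence E1: "even (WW (T1-{t'}) a)" "Om P1 T1 a = mat (Sg (WW (T1-{t'}) a)) ** (eta (-x) ** eta (-x) ** eta (-x))"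
        using C1 c1 t0n t' by auto
      have "Om vs T a = mat (- (Sg (WW (T1-{t'}) a) * (- Sg (WW T2 a))))"
        unfolding OmT E1(2) E2(2) by (rule matB)
      moreover have "WW T a = 2 + (WW (T1-{t'}) a + WW T2 a)"
        using WT WW_remove[OF sd(3) c1, of a] t'(3) wt_neg[of x] by simp
      moreover have "Sg (2 + (WW (T1-{t'}) a + WW T2 a)) = - Sg (WW (T1-{t'}) a + WW T2 a)" by (rule Sg_2)
      ultimately have part1: "even (WW T a) \<and> Om vs T a = mat (- Sg (WW T a))"
        using E1(1) E2(1) Sg_add[OF E1(1) E2(1)] by simp
      show ?thesis using part1 part2gen t' c1 T1T by blast
    next
      case c2
      hence "t' \<notin> T1" using sd(2) by blast
      hence cl1: "\<forall>p\<in>P. p \<inter> T1 \<noteq> {} \<longrightarrow> p \<subseteq> T1" using Y1 by blast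
      have E1: "even (WW T1 a)" "Om P1 T1 a = mat (- Sg (WW T1 a))" using C1 cl1 by auto
      have "{t',t0} \<in> P" using p0 t' by (simp add: insert_commute)
      hence E2: "even (WW (T2-{t'}) a)" "Om P2 T2 a = mat (Sg (WW (T2-{t'}) a)) ** (eta (-x) ** eta (-x) ** eta (-x))"
        using C2 c2 t0n t' by auto
      have "Om vs T a = mat (- ((- Sg (WW T1 a)) * Sg (WW (T2-{t'}) a)))"
        unfolding OmT E1(2) E2(2) by (rule matC)
      moreover have "WW T a = 2 + (WW T1 a + WW (T2-{t'}) a)"
        using WT WW_remove[OF sd(4) c2, of a] t'(3) wt_neg[of x] by simp
      moreover have "Sg (2 + (WW T1 a + WW (T2-{t'}) a)) = - Sg (WW T1 a + WW (T2-{t'}) a)" by (rule Sg_2)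
      ultimately have part1: "even (WW T a) \<and> Om vs T a = mat (- Sg (WW T a))"
        using E1(1) E2(1) Sg_add[OF E1(1) E2(1)] by simp
      show ?thesis using part1 part2gen t' c2 T1T by blast
    next
      case c3
      have cl1: "\<forall>p\<in>P. p \<inter> T1 \<noteq> {} \<longrightarrow> p \<subseteq> T1" using Y1 c3 by blast
      have cl2: "\<forall>p\<in>P. p \<inter> T2 \<noteq> {} \<longrightarrow> p \<subseteq> T2" using Y2 c3 by blast
      have E1: "even (WW T1 a)" "Om P1 T1 a = mat (- Sg (WW T1 a))" using C1 cl1 by auto
      have E2: "even (WW T2 a)" "Om P2 T2 a = mat (- Sg (WW T2 a))" using C2 cl2 by auto
      have OmT': "Om vs T a = mat (Sg (WW T1 a) * Sg (WW T2 a)) ** (eta x ** eta x ** eta x)"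
        unfolding OmT E1(2) E2(2) matA by simp
      have t'T: "t' \<notin> T" using c3 t' unfolding T_def by auto
      have q1: "p0 \<inter> T \<noteq> {}" using p0(2) t0T by blast
      have q2: "\<not> p0 \<subseteq> T" using t'(1) t'T by auto
      have part1: "\<not> (\<forall>p\<in>P. p \<inter> T \<noteq> {} \<longrightarrow> p \<subseteq> T)" using p0(1) q1 q2 by blast
      have TR: "T - {t0} = T1 \<union> T2" unfolding T_def using t0n by auto
      have part2: "even (WW (T-{t0}) a) \<and> Om vs T a = mat (Sg (WW (T-{t0}) a)) ** (eta (a t0) ** eta (a t0) ** eta (a t0))"
        unfolding TR WW_union[OF sd(3,4,2)] using OmT' Sg_add[OF E1(1) E2(1)] E1(1) E2(1) x_def by simp
      show ?thesis using part1 part2 part2gen by blast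
    qed
  qed
  from main show ?case unfolding T_def t0_def .
qed

lemma WW_card: "finite T \<Longrightarrow> WW T a = 2 * card {t\<in>T. a t < 0} + card {t\<in>T. a t = 0}"
proof -
  assume f: "finite T"
  have "WW T a = (\<Sum>t\<in>T. 2 * of_bool (a t < 0) + of_bool (a t = 0))"
    unfolding WW_def by (rule sum.cong) (auto simp: wt_def)
  also have "\<dots> = 2 * card (T \<inter> {t. a t < 0}) + card (T \<inter> {t. a t = 0})"
    using f by (simp add: sum.distrib sum_distrib_left[symmetric])
  also have "T \<inter> {t. a t < 0} = {t\<in>T. a t < 0}" by auto
  also have "T \<inter> {t. a t = 0} = {t\<in>T. a t = 0}" by auto
  finally show ?thesis .
qed

lemma vs_Om: "vertex_sums m T a = map (csum T a) [1..<m+1]"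
  unfolding vertex_sums_def csum_def by simp

lemma qc_Om: "quiddity_cycle (vertex_sums m T a) \<longleftrightarrow> Om [1..<m+1] T a = - mat 1"
  unfolding quiddity_cycle_def vs_Om Om_def prodm_def by (simp add: comp_def)

lemma squares_good:
  assumes "squares_condition T a"
  obtains P where "good P a" "\<Union>P = {t\<in>T. a t \<notin> {1,-1}}"
proof -
  obtain P where "\<Union>P = {t\<in>T. a t \<notin> {1,-1}}" "\<forall>p\<in>P. \<forall>q\<in>P. p \<noteq> q \<longrightarrow> p \<inter> q = {}"
     "\<forall>p\<in>P. \<exists>t1 t2. p = {t1, t2} \<and> t1 \<noteq> t2 \<and> card (t1 \<inter> t2) = 2 \<and> a t1 = - a t2"
    using assms unfolding squares_condition_def by (elim exE conjE) simp
  thus ?thesis using that unfolding good_def by simp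
qed

lemma part_a:
  assumes "2 \<le> m" "triangulation [1..<m+1] T" "admissible T a"
  shows "quiddity_cycle (vertex_sums m T a)"
proof -
  have sq: "squares_condition T a" using assms(3) unfolding admissible_def by simp
  obtain P where P: "good P a" "\<Union>P = {t\<in>T. a t \<notin> {1,-1}}"
    by (rule squares_good[OF sq])
  obtain k :: int where k: "label_d T a = of_int (2*k)" using assms(3) unfolding admissible_def by blast
  have d: "distinct [1..<m+1]" by simp
  have H1: "\<forall>t\<in>T. t \<notin> \<Union>P \<longrightarrow> a t \<in> {1,-1}" using P(2) by blast
  have cl: "\<forall>p\<in>P. p \<inter> T \<noteq> {} \<longrightarrow> p \<subseteq> T" using P(2) by blast
  hence H3: "\<forall>p\<in>P. p \<inter> T \<noteq> {} \<longrightarrow> p \<subseteq> T \<or> (\<exists>r t'. p = {r,t'} \<and> r \<in> T \<and> hd [1..<m+1] \<in> r \<and> last [1..<m+1] \<in> r \<and> t' \<notin> T)"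
    by blast
  have E: "even (WW T a)" "Om [1..<m+1] T a = mat (- Sg (WW T a))"
    using main_a[OF assms(2) d P(1) H1 H3] cl by auto
  have fT: "finite T" using tri_basic[OF assms(2) d] by simp
  have "of_nat (card {t\<in>T. a t < 0}) + of_nat (card {t\<in>T. a t = 0}) / 2 = (of_int (2*k) :: rat)"
    using k unfolding label_d_def .
  hence "2 * of_nat (card {t\<in>T. a t < 0}) + of_nat (card {t\<in>T. a t = 0}) = (of_int (4*k) :: rat)"
    by (simp add: field_simps)
  hence "(of_int (int (2 * card {t\<in>T. a t < 0} + card {t\<in>T. a t = 0})) :: rat) = of_int (4*k)"
    by simp
  hence "int (2 * card {t\<in>T. a t < 0} + card {t\<in>T. a t = 0}) = 4*k"
    by (simp only: of_int_eq_iff)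
  hence W: "int (WW T a) = 4 * k" using WW_card[OF fT] by simp
  hence "WW T a div 2 = 2 * nat k" by linarith
  hence "Sg (WW T a) = 1" unfolding Sg_def by simp
  hence "Om [1..<m+1] T a = - mat 1" using E(2) unfolding mat_M2 by simp
  thus ?thesis using qc_Om by simp
qed

definition pm :: "int list \<Rightarrow> bool" where
  "pm cs \<longleftrightarrow> prodm (map eta cs) = mat 1 \<or> prodm (map eta cs) = - mat 1"

lemma mat_central: "(mat k :: int^2^2) ** (A :: int^2^2) = A ** mat k"
proof -
  obtain p q r s where X: "A = M2 p q r s" using M2_all by blast
  show ?thesis unfolding X mat_M2 by (simp add: algebra_simps)
qed

lemma neg_mult_left: "(- A :: int^2^2) ** (B :: int^2^2) = - (A ** B)"
proof -
  obtain p q r s where X: "A = M2 p q r s" using M2_all by blast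
  obtain p' q' r' s' where Y: "B = M2 p' q' r' s'" using M2_all by blast
  show ?thesis unfolding X Y by (simp add: algebra_simps)
qed
lemma neg_mult_right: "(A :: int^2^2) ** (- B :: int^2^2) = - (A ** B)"
proof -
  obtain p q r s where X: "A = M2 p q r s" using M2_all by blast
  obtain p' q' r' s' where Y: "B = M2 p' q' r' s'" using M2_all by blast
  show ?thesis unfolding X Y by (simp add: algebra_simps)
qed

lemma prodm_linv: "\<exists>L. L ** prodm (map eta xs) = mat 1"
proof (induction xs)
  case Nil show ?case by (intro exI[of _ "mat 1"]) (simp add: matrix_mul_lid)
next
  case (Cons x xs)
  then obtain L where L: "L ** prodm (map eta xs) = mat 1" by blast
  have ie: "M2 0 1 (-1) x ** eta x = mat 1" by (simp add: eta_M2 mat_M2)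
  have "(L ** M2 0 1 (-1) x) ** (eta x ** prodm (map eta xs)) = L ** ((M2 0 1 (-1) x ** eta x) ** prodm (map eta xs))"
    by (simp add: matrix_mul_assoc)
  also have "\<dots> = mat 1" using ie L by (simp add: matrix_mul_lid)
  finally show ?case by auto
qed

lemma pm_rot: "pm (xs @ ys) \<Longrightarrow> pm (ys @ xs)"
proof -
  assume a: "pm (xs @ ys)"
  define A where "A = prodm (map eta xs)"
  define B where "B = prodm (map eta ys)"
  obtain L where L: "L ** A = mat 1" using prodm_linv A_def by blast
  obtain s :: int where s: "A ** B = mat s" "s = 1 \<or> s = -1"
    using a unfolding pm_def A_def B_def by (auto simp: mat_M2)
  have "B = L ** mat s" using L s(1) by (metis matrix_mul_assoc matrix_mul_lid)
  hence "B ** A = mat s ** (L ** A)" by (simp add: mat_central matrix_mul_assoc)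
  hence "B ** A = mat s" using L by (simp add: matrix_mul_rid)
  thus ?thesis using s(2) unfolding pm_def A_def B_def by (auto simp: mat_M2)
qed

lemma eta_ear: "eta a ** eta 1 ** eta b = eta (a - 1) ** eta (b - 1)"
  "eta a ** eta (-1) ** eta b = - (eta (a + 1) ** eta (b + 1))"
  by (simp_all add: eta_M2 algebra_simps)

lemma eta_zero: "eta a ** eta 0 ** eta b = - eta (a + b)"
  by (simp add: eta_M2 algebra_simps)

lemma pm_mid: "(prodm (map eta Z) = prodm (map eta Z') \<or> prodm (map eta Z) = - prodm (map eta Z')) \<Longrightarrow>
   pm (X @ Z @ Y) \<Longrightarrow> pm (X @ Z' @ Y)"
proof -
  assume h: "prodm (map eta Z) = prodm (map eta Z') \<or> prodm (map eta Z) = - prodm (map eta Z')" and p: "pm (X @ Z @ Y)"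
  have "prodm (map eta (X @ Z @ Y)) = prodm (map eta (X @ Z' @ Y)) \<or> prodm (map eta (X @ Z @ Y)) = - prodm (map eta (X @ Z' @ Y))"
    using h by (auto simp: neg_mult_left neg_mult_right)
  thus ?thesis using p unfolding pm_def by (metis minus_minus)
qed

lemma pm_ear: "e \<in> {1,-1} \<Longrightarrow> pm (X @ [a, e, b] @ Y) \<Longrightarrow> pm (X @ [a - e, b - e] @ Y)"
  apply (erule pm_mid[rotated])
  using eta_ear by (auto simp: matrix_mul_assoc matrix_mul_rid)

lemma pm_zero: "pm (X @ [a, 0, b] @ Y) \<Longrightarrow> pm (X @ [a + b] @ Y)"
  apply (erule pm_mid[rotated])
  using eta_zero by (auto simp: matrix_mul_assoc matrix_mul_rid)

lemma growth: "(\<forall>c\<in>set cs. \<bar>c\<bar> \<ge> 2) \<Longrightarrow> cs = [] \<or> (\<bar>prodm (map eta cs) $ 1 $ 1\<bar> > \<bar>prodm (map eta cs) $ 2 $ 1\<bar> \<and> \<bar>prodm (map eta cs) $ 1 $ 1\<bar> \<ge> 2)"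
proof (induction cs)
  case Nil thus ?case by simp
next
  case (Cons c cs)
  define R where "R = prodm (map eta cs)"
  have R: "\<bar>R $ 1 $ 1\<bar> > \<bar>R $ 2 $ 1\<bar>" "\<bar>R $ 1 $ 1\<bar> \<ge> 1"
  proof -
    have "cs = [] \<or> (\<bar>R $ 1 $ 1\<bar> > \<bar>R $ 2 $ 1\<bar> \<and> \<bar>R $ 1 $ 1\<bar> \<ge> 2)" using Cons R_def by simp
    moreover have "cs = [] \<Longrightarrow> R = M2 1 0 0 1" unfolding R_def by (simp add: mat_M2)
    ultimately show "\<bar>R $ 1 $ 1\<bar> > \<bar>R $ 2 $ 1\<bar>" "\<bar>R $ 1 $ 1\<bar> \<ge> 1" by (auto simp: M2_comp)
  qed
  have c: "\<bar>c\<bar> \<ge> 2" using Cons.prems by simp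
  have e: "prodm (map eta (c#cs)) = M2 c (-1) 1 0 ** M2 (R$1$1) (R$1$2) (R$2$1) (R$2$2)"
    using M2_all[of R] R_def by (simp add: eta_M2)
  have "\<bar>c * R$1$1 - R$2$1\<bar> \<ge> \<bar>c\<bar> * \<bar>R$1$1\<bar> - \<bar>R$2$1\<bar>" by (simp add: abs_mult[symmetric] abs_diff_le_iff abs_triangle_ineq2 order_trans[OF abs_triangle_ineq2])
  moreover have "\<bar>c\<bar> * \<bar>R$1$1\<bar> \<ge> 2 * \<bar>R$1$1\<bar>" using c by (simp add: mult_right_mono)
  ultimately have "\<bar>c * R$1$1 - R$2$1\<bar> > \<bar>R$1$1\<bar>" using R by linarith
  thus ?case using e R by (simp add: M2_comp)
qed

lemma growth_pm: "cs \<noteq> [] \<Longrightarrow> \<forall>c\<in>set cs. c \<notin> {-1,0,1} \<Longrightarrow> \<not> pm cs"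
proof -
  assume ne: "cs \<noteq> []" and a: "\<forall>c\<in>set cs. c \<notin> {-1,0,1}"
  have "\<forall>c\<in>set cs. \<bar>c\<bar> \<ge> 2" using a by force
  hence g: "\<bar>prodm (map eta cs) $ 1 $ 1\<bar> \<ge> 2" using growth ne by blast
  show "\<not> pm cs" unfolding pm_def using g by (auto simp: mat_M2 M2_comp)
qed

lemma tri_len: "triangulation vs T \<Longrightarrow> 2 \<le> length vs"
  by (induction rule: triangulation.induct) auto

lemma ins_back: "triangulation vs T \<Longrightarrow> triangulation (vs @ [w]) (insert {hd vs, last vs, w} T)"
proof -
  assume t: "triangulation vs T"
  have l: "2 \<le> length vs" using tri_len[OF t] .
  define j where "j = length vs - 1"
  have "triangulation (vs @ [w]) (insert {hd (vs @ [w]), (vs @ [w]) ! j, last (vs @ [w])} (T \<union> {}))"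
  proof (rule triangulation.split)
    show "0 < j" "j < length (vs @ [w]) - 1" using l j_def by auto
    show "triangulation (take (Suc j) (vs @ [w])) T" using t l j_def by simp
    obtain ys y where e: "vs = ys @ [y]" using l by (cases vs rule: rev_exhaust) auto
    have "drop j (vs @ [w]) = [last vs, w]" using e j_def by simp
    thus "triangulation (drop j (vs @ [w])) {}" by (simp add: triangulation.two)
  qed
  moreover have "vs \<noteq> []" using l by auto
  hence "(vs @ [w]) ! j = last vs" using l j_def by (auto simp: nth_append last_conv_nth)
  moreover have "hd (vs @ [w]) = hd vs" using l by (cases vs) auto
  ultimately show ?thesis by (simp add: insert_commute)
qed

lemma ins_front: "triangulation vs T \<Longrightarrow> triangulation (w # vs) (insert {w, hd vs, last vs} T)"
proof -
  assume t: "triangulation vs T"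
  have l: "2 \<le> length vs" using tri_len[OF t] .
  have "triangulation (w # vs) (insert {hd (w # vs), (w # vs) ! 1, last (w # vs)} ({} \<union> T))"
  proof (rule triangulation.split)
    show "0 < (1::nat)" "1 < length (w # vs) - 1" using l by auto
    have "take (Suc 1) (w # vs) = [w, hd vs]" using l by (cases vs) auto
    thus "triangulation (take (Suc 1) (w # vs)) {}" by (simp add: triangulation.two)
    show "triangulation (drop 1 (w # vs)) T" using t by simp
  qed
  moreover have "(w # vs) ! 1 = hd vs" "last (w # vs) = last vs" using l by (cases vs, auto)+
  ultimately show ?thesis by simp
qed

lemma ins_mid: "triangulation vs T \<Longrightarrow> vs = xs @ u # v # ys \<Longrightarrow>
    triangulation (xs @ u # w # v # ys) (insert {u,w,v} T)"
proof (induction arbitrary: xs ys rule: triangulation.induct)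
  case (two a b)
  hence e: "xs = []" "ys = []" "a = u" "b = v" by (cases xs; auto simp: Cons_eq_append_conv)+
  have "triangulation [u,w,v] (insert {hd [u,w,v], [u,w,v] ! 1, last [u,w,v]} ({} \<union> {}))"
    by (rule triangulation.split) (auto intro: triangulation.two)
  thus ?case using e by simp
next
  case (split j vs T1 T2)
  define p where "p = length xs"
  define nvs where "nvs = xs @ u # w # v # ys"
  have lv: "length vs = p + 2 + length ys" using split.prems p_def by simp
  have hd: "hd nvs = hd vs" unfolding nvs_def split.prems by (cases xs) auto
  have lst: "last nvs = last vs" unfolding nvs_def split.prems by simp
  show ?case
  proof (cases "p + 1 \<le> j")
    case True
    obtain r where r: "j = p + 1 + r" using True by (metis le_add_diff_inverse)
    define ys' where "ys' = take r ys"
    have tk: "take (Suc j) vs = xs @ u # v # ys'" unfolding split.prems ys'_def using r p_def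
      by (simp add: take_append eval_nat_numeral)
    have IH: "triangulation (xs @ u # w # v # ys') (insert {u,w,v} T1)" by (rule split.IH(1)[OF tk])
    have "triangulation nvs (insert {hd nvs, nvs ! (Suc j), last nvs} (insert {u,w,v} T1 \<union> T2))"
    proof (rule triangulation.split)
      show "0 < Suc j" by simp
      show "Suc j < length nvs - 1" using split.hyps(2) lv nvs_def p_def by simp
      have "take (Suc (Suc j)) nvs = xs @ u # w # v # ys'" unfolding nvs_def ys'_def using r p_def
        by (simp add: take_append eval_nat_numeral)
      thus "triangulation (take (Suc (Suc j)) nvs) (insert {u,w,v} T1)" using IH by simp
      have "drop (Suc j) nvs = drop j vs" unfolding nvs_def split.prems using r p_def
        by (simp add: drop_append eval_nat_numeral)
      thus "triangulation (drop (Suc j) nvs) T2" using split.hyps(4) by simp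
    qed
    moreover have "nvs ! Suc j = vs ! j" unfolding nvs_def split.prems using r p_def
      by (simp add: nth_append)
    ultimately show ?thesis using hd lst nvs_def by (simp add: insert_commute)
  next
    case False
    hence jp: "j \<le> p" by simp
    have dr: "drop j vs = drop j xs @ u # v # ys" unfolding split.prems using jp p_def by simp
    have IH: "triangulation (drop j xs @ u # w # v # ys) (insert {u,w,v} T2)" by (rule split.IH(2)[OF dr])
    have "triangulation nvs (insert {hd nvs, nvs ! j, last nvs} (T1 \<union> insert {u,w,v} T2))"
    proof (rule triangulation.split)
      show "0 < j" by (rule split.hyps(1))
      show "j < length nvs - 1" using split.hyps(2) lv nvs_def p_def by simp
      have "Suc j - length xs = 0 \<or> Suc j - length xs = 1" using jp p_def by auto
      hence "take (Suc j) nvs = take (Suc j) vs" unfolding nvs_def split.prems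
        by (auto simp add: take_append)
      thus "triangulation (take (Suc j) nvs) T1" using split.hyps(3) by simp
      have "drop j nvs = drop j xs @ u # w # v # ys" unfolding nvs_def using jp p_def by simp
      thus "triangulation (drop j nvs) (insert {u,w,v} T2)" using IH by simp
    qed
    moreover have "nvs ! j = vs ! j" unfolding nvs_def split.prems using jp p_def
      by (simp add: nth_append)
    ultimately show ?thesis using hd lst nvs_def by (simp add: insert_commute)
  qed
qed

definition Real :: "nat list \<Rightarrow> int list \<Rightarrow> bool" where
  "Real vs cs \<longleftrightarrow> (\<exists>T a. triangulation vs T \<and> squares_condition T a \<and> cs = map (csum T a) vs)"

lemma csum_out: "triangulation vs T \<Longrightarrow> distinct vs \<Longrightarrow> w \<notin> set vs \<Longrightarrow> csum T a w = 0"
proof -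
  assume t: "triangulation vs T" and d: "distinct vs" and w: "w \<notin> set vs"
  have "\<forall>t\<in>T. t \<subseteq> set vs" using tri_basic[OF t d] by simp
  hence "\<forall>t\<in>T. w \<notin> t" using w by blast
  thus ?thesis by (rule csum_zero)
qed

lemma good_pair: "good P a \<Longrightarrow> p \<in> P \<Longrightarrow> \<exists>t1 t2. p = {t1,t2} \<and> t1 \<noteq> t2 \<and> card (t1\<inter>t2) = 2 \<and> a t1 = - a t2"
  unfolding good_def by (elim conjE) (erule bspec)

lemma good_cong: "good P a \<Longrightarrow> \<forall>t\<in>\<Union>P. b t = a t \<Longrightarrow> good P b"
proof -
  assume g: "good P a" and ag: "\<forall>t\<in>\<Union>P. b t = a t"
  have pr: "\<exists>s1 s2. p = {s1,s2} \<and> s1 \<noteq> s2 \<and> card (s1\<inter>s2) = 2 \<and> b s1 = - b s2" if p: "p \<in> P" for p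
  proof -
    obtain s1 s2 where s: "p = {s1,s2}" "s1 \<noteq> s2" "card (s1\<inter>s2) = 2" "a s1 = - a s2"
      using good_pair[OF g p] by auto
    moreover have "b s1 = a s1" "b s2 = a s2" using ag p s(1) by auto
    ultimately show ?thesis by (intro exI[of _ s1] exI[of _ s2]) simp
  qed
  have d: "\<forall>p\<in>P. \<forall>q\<in>P. p \<noteq> q \<longrightarrow> p \<inter> q = {}" using g unfolding good_def by simp
  show ?thesis unfolding good_def by (rule conjI[OF ballI[OF pr] d])
qed

lemma ear_ext:
  assumes t: "triangulation vs' T'" and d: "distinct vs'" and sq: "squares_condition T' a'"
    and w: "w \<notin> set vs'" "w \<in> tn" and e: "e \<in> {1,-1}"
  shows "squares_condition (insert tn T') (a'(tn := e))"
    "\<And>v. csum (insert tn T') (a'(tn := e)) v = csum T' a' v + (if v \<in> tn then e else 0)"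
proof -
  have tb: "finite T'" "\<forall>t\<in>T'. t \<subseteq> set vs'" using tri_basic[OF t d] by auto
  have tn: "tn \<notin> T'" using tb w by blast
  obtain P where P: "good P a'" "\<Union>P = {t\<in>T'. a' t \<notin> {1,-1}}" by (rule squares_good[OF sq])
  have U: "{t\<in>insert tn T'. (a'(tn := e)) t \<notin> {1,-1}} = {t\<in>T'. a' t \<notin> {1,-1}}" using e tn by auto
  have "\<forall>t\<in>\<Union>P. (a'(tn := e)) t = a' t" using P(2) tn by auto
  hence "good P (a'(tn := e))" using P(1) good_cong by blast
  hence gg: "\<forall>p\<in>P. \<exists>t1 t2. p = {t1,t2} \<and> t1 \<noteq> t2 \<and> card (t1\<inter>t2) = 2 \<and> (a'(tn := e)) t1 = - (a'(tn := e)) t2"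
     "\<forall>p\<in>P. \<forall>q\<in>P. p \<noteq> q \<longrightarrow> p \<inter> q = {}" unfolding good_def by simp_all
  show "squares_condition (insert tn T') (a'(tn := e))" unfolding squares_condition_def
    by (intro exI[of _ P] conjI) (use P(2) U gg in simp_all)
  fix v
  have "csum T' (a'(tn := e)) v = csum T' a' v" by (rule csum_cong) (use tn in auto)
  thus "csum (insert tn T') (a'(tn := e)) v = csum T' a' v + (if v \<in> tn then e else 0)"
    using csum_insert[OF tb(1) tn, of "a'(tn := e)" v] by simp
qed

lemma sq_ext:
  assumes t: "triangulation vs' T'" and d: "distinct vs'" and sq: "squares_condition T' a'"
    and w: "w \<notin> set vs'" "w \<in> t1" "w \<in> t2" and tt: "t1 \<noteq> t2" "card (t1 \<inter> t2) = 2" and x: "x \<notin> {1,-1}"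
  shows "squares_condition (insert t1 (insert t2 T')) (a'(t1 := x, t2 := -x))"
    "\<And>v. csum (insert t1 (insert t2 T')) (a'(t1 := x, t2 := -x)) v = csum T' a' v + (if v \<in> t1 then x else 0) + (if v \<in> t2 then -x else 0)"
proof -
  define b where "b = a'(t1 := x, t2 := -x)"
  have tb: "finite T'" "\<forall>t\<in>T'. t \<subseteq> set vs'" using tri_basic[OF t d] by auto
  have tn: "t1 \<notin> T'" "t2 \<notin> T'" using tb w by blast+
  have tn1: "t1 \<notin> insert t2 T'" using tn tt by auto
  obtain P where P: "good P a'" "\<Union>P = {t\<in>T'. a' t \<notin> {1,-1}}" by (rule squares_good[OF sq])
  have bt: "b t1 = x" "b t2 = -x" unfolding b_def using tt by auto
  have x2: "-x \<notin> {1,-1}" using x by auto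
  have U: "{t\<in>insert t1 (insert t2 T'). b t \<notin> {1,-1}} = {t1,t2} \<union> {t\<in>T'. a' t \<notin> {1,-1}}"
    using x x2 tn bt unfolding b_def by auto
  have ag: "\<forall>t\<in>\<Union>P. b t = a' t" using P(2) tn unfolding b_def by auto
  have "good P b" using good_cong[OF P(1) ag] .
  hence g1: "\<forall>p\<in>P. \<exists>s1 s2. p = {s1,s2} \<and> s1 \<noteq> s2 \<and> card (s1\<inter>s2) = 2 \<and> b s1 = - b s2"
    using good_pair by blast
  have dj: "{t1,t2} \<inter> p = {}" if "p \<in> P" for p using that P(2) tn by blast
  have "squares_condition (insert t1 (insert t2 T')) b"
    unfolding squares_condition_def
  proof (intro exI[of _ "insert {t1,t2} P"] conjI)
    show "\<Union>(insert {t1,t2} P) = {t\<in>insert t1 (insert t2 T'). b t \<notin> {1,-1}}" using U P(2) by auto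
    show "\<forall>p\<in>insert {t1,t2} P. \<forall>q\<in>insert {t1,t2} P. p \<noteq> q \<longrightarrow> p \<inter> q = {}"
      using P(1) dj unfolding good_def by (metis Int_commute insert_iff)
    have "\<exists>s1 s2. {t1,t2} = {s1,s2} \<and> s1 \<noteq> s2 \<and> card (s1\<inter>s2) = 2 \<and> b s1 = - b s2"
      using tt bt by (intro exI[of _ t1] exI[of _ t2]) simp
    thus "\<forall>p\<in>insert {t1,t2} P. \<exists>s1 s2. p = {s1,s2} \<and> s1 \<noteq> s2 \<and> card (s1\<inter>s2) = 2 \<and> b s1 = - b s2"
      using g1 by (simp only: ball_simps)
  qed
  thus "squares_condition (insert t1 (insert t2 T')) (a'(t1 := x, t2 := -x))" unfolding b_def .
  fix v
  have "csum T' b v = csum T' a' v" by (rule csum_cong) (use tn in \<open>auto simp: b_def\<close>)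
  moreover have "csum (insert t1 (insert t2 T')) b v = (if v \<in> t1 then x else 0) + ((if v \<in> t2 then -x else 0) + csum T' b v)"
    using csum_insert[OF _ tn1, of b v] csum_insert[OF tb(1) tn(2), of b v] tb(1) bt by simp
  ultimately show "csum (insert t1 (insert t2 T')) (a'(t1 := x, t2 := -x)) v = csum T' a' v + (if v \<in> t1 then x else 0) + (if v \<in> t2 then -x else 0)"
    unfolding b_def by simp
qed

lemma win3: "k + 3 \<le> length xs \<Longrightarrow> xs = take k xs @ [xs!k, xs!(k+1), xs!(k+2)] @ drop (k+3) xs"
proof -
  assume l: "k + 3 \<le> length xs"
  have "drop k xs = xs!k # xs!(k+1) # xs!(k+2) # drop (k+3) xs" using l
    by (metis Cons_nth_drop_Suc add_2_eq_Suc' add_Suc_right numeral_3_eq_3 less_le_trans lessI le_add1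
        Suc_le_lessD add_lessD1 Suc_eq_plus1 numeral_2_eq_2)
  thus ?thesis by (metis append_Cons append_Nil append_take_drop_id)
qed

definition IHP :: "nat \<Rightarrow> bool" where
  "IHP n \<longleftrightarrow> (\<forall>cs vs. length cs < n \<longrightarrow> 2 \<le> length cs \<longrightarrow> pm cs \<longrightarrow> distinct vs \<longrightarrow> length vs = length cs \<longrightarrow> Real vs cs)"

lemma map_split3: "length X = length VX \<Longrightarrow> X @ Z @ Y = map f (VX @ VZ @ VY) \<Longrightarrow> length Z = length VZ \<Longrightarrow>
   X = map f VX \<and> Z = map f VZ \<and> Y = map f VY"
  by (simp add: append_eq_append_conv)

lemma ear_mid:
  assumes IH: "IHP n" and l: "length cs = n" "length vs = n" and d: "distinct vs" and p: "pm cs"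
    and cs: "cs = X @ [a0, e, b] @ Y" and vs: "vs = VX @ [u, w, v] @ VY" and lx: "length X = length VX"
    and e: "e \<in> {1,-1}"
  shows "Real vs cs"
proof -
  define cs' where "cs' = X @ [a0 - e, b - e] @ Y"
  define vs' where "vs' = VX @ [u, v] @ VY"
  have p': "pm cs'" unfolding cs'_def using pm_ear[OF e] p cs by simp
  have ly: "length Y = length VY" using l cs vs lx by simp
  have d': "distinct vs'" "w \<notin> set vs'" using d unfolding vs vs'_def by auto
  have "Real vs' cs'" using IH p' d' l cs vs lx unfolding IHP_def cs'_def vs'_def by simp
  then obtain T' a' where T': "triangulation vs' T'" "squares_condition T' a'" "cs' = map (csum T' a') vs'"
    unfolding Real_def by blast
  define f where "f = csum T' a'"
  have X: "X = map f VX" "[a0 - e, b - e] = map f [u,v]" "Y = map f VY"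
    using map_split3[OF lx T'(3)[unfolded cs'_def vs'_def, folded f_def]] by simp_all
  define tn where "tn = {u,w,v}"
  have wt: "w \<in> tn" unfolding tn_def by simp
  note ee = ear_ext[OF T'(1) d'(1) T'(2) d'(2) wt e]
  have tri: "triangulation vs (insert tn T')"
    using ins_mid[OF T'(1), of VX u v VY w] unfolding vs vs'_def tn_def by simp
  define g where "g = csum (insert tn T') (a'(tn := e))"
  have g: "g x = f x + (if x \<in> tn then e else 0)" for x unfolding g_def f_def using ee(2) .
  have fw: "f w = 0" unfolding f_def by (rule csum_out[OF T'(1) d'])
  have gX: "map g VX = map f VX" "map g VY = map f VY"
    using d unfolding vs g tn_def by (auto intro!: map_cong)
  have "cs = map g vs" unfolding cs vs using gX X g fw by (simp add: tn_def)
  thus ?thesis unfolding Real_def g_def using tri ee(1) by blast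
qed

lemma pm_ear_wrap: "e \<in> {1,-1} \<Longrightarrow> pm (C @ [a0, e, b]) \<Longrightarrow> pm ((b - e) # C @ [a0 - e])"
proof -
  assume e: "e \<in> {1,-1}" and p: "pm (C @ [a0, e, b])"
  have "pm (C @ [a0 - e, b - e] @ [])" using pm_ear[OF e, of C a0 b "[]"] p by simp
  hence "pm ((C @ [a0 - e]) @ [b - e])" by simp
  from pm_rot[OF this] show ?thesis by simp
qed

lemma ear_front:
  assumes IH: "IHP n" and l: "length cs = n" "length vs = n" and d: "distinct vs" and p: "pm cs"
    and cs: "cs = e # b # C @ [a0]" and vs: "vs = w # v # VC @ [u]" and lx: "length C = length VC"
    and e: "e \<in> {1,-1}"
  shows "Real vs cs"
proof -
  define cs' where "cs' = (b - e) # C @ [a0 - e]"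
  define vs' where "vs' = v # VC @ [u]"
  have "pm ([e, b] @ (C @ [a0]))" using p cs by simp
  from pm_rot[OF this] have "pm (C @ [a0, e, b])" by simp
  hence p': "pm cs'" unfolding cs'_def by (rule pm_ear_wrap[OF e])
  have d': "distinct vs'" "w \<notin> set vs'" using d unfolding vs vs'_def by auto
  have "Real vs' cs'" using IH p' d' l cs vs lx unfolding IHP_def cs'_def vs'_def by simp
  then obtain T' a' where T': "triangulation vs' T'" "squares_condition T' a'" "cs' = map (csum T' a') vs'"
    unfolding Real_def by blast
  define f where "f = csum T' a'"
  have X: "b - e = f v" "C = map f VC" "a0 - e = f u"
    using T'(3)[unfolded cs'_def vs'_def, folded f_def] by simp_all
  define tn where "tn = {w,v,u}"
  have wt: "w \<in> tn" unfolding tn_def by simp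
  note ee = ear_ext[OF T'(1) d'(1) T'(2) d'(2) wt e]
  have tri: "triangulation vs (insert tn T')"
    using ins_front[OF T'(1), of w] unfolding vs vs'_def tn_def by simp
  define g where "g = csum (insert tn T') (a'(tn := e))"
  have g: "g x = f x + (if x \<in> tn then e else 0)" for x unfolding g_def f_def using ee(2) .
  have fw: "f w = 0" unfolding f_def by (rule csum_out[OF T'(1) d'])
  have gX: "map g VC = map f VC"
    using d unfolding vs g tn_def by (auto intro!: map_cong)
  have "cs = map g vs" unfolding cs vs using gX X g fw by (simp add: tn_def)
  thus ?thesis unfolding Real_def g_def using tri ee(1) by blast
qed

lemma ear_back:
  assumes IH: "IHP n" and l: "length cs = n" "length vs = n" and d: "distinct vs" and p: "pm cs"
    and cs: "cs = b # C @ [a0, e]" and vs: "vs = v # VC @ [u, w]" and lx: "length C = length VC"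
    and e: "e \<in> {1,-1}"
  shows "Real vs cs"
proof -
  define cs' where "cs' = (b - e) # C @ [a0 - e]"
  define vs' where "vs' = v # VC @ [u]"
  have "pm ([b] @ (C @ [a0, e]))" using p cs by simp
  from pm_rot[OF this] have "pm (C @ [a0, e, b])" by simp
  hence p': "pm cs'" unfolding cs'_def by (rule pm_ear_wrap[OF e])
  have d': "distinct vs'" "w \<notin> set vs'" using d unfolding vs vs'_def by auto
  have "Real vs' cs'" using IH p' d' l cs vs lx unfolding IHP_def cs'_def vs'_def by simp
  then obtain T' a' where T': "triangulation vs' T'" "squares_condition T' a'" "cs' = map (csum T' a') vs'"
    unfolding Real_def by blast
  define f where "f = csum T' a'"
  have X: "b - e = f v" "C = map f VC" "a0 - e = f u"
    using T'(3)[unfolded cs'_def vs'_def, folded f_def] by simp_all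
  define tn where "tn = {v,u,w}"
  have wt: "w \<in> tn" unfolding tn_def by simp
  note ee = ear_ext[OF T'(1) d'(1) T'(2) d'(2) wt e]
  have tri: "triangulation vs (insert tn T')"
    using ins_back[OF T'(1), of w] unfolding vs vs'_def tn_def by simp
  define g where "g = csum (insert tn T') (a'(tn := e))"
  have g: "g x = f x + (if x \<in> tn then e else 0)" for x unfolding g_def f_def using ee(2) .
  have fw: "f w = 0" unfolding f_def by (rule csum_out[OF T'(1) d'])
  have gX: "map g VC = map f VC"
    using d unfolding vs g tn_def by (auto intro!: map_cong)
  have "cs = map g vs" unfolding cs vs using gX X g fw by (simp add: tn_def)
  thus ?thesis unfolding Real_def g_def using tri ee(1) by blast
qed

lemma sq1_mid:
  assumes IH: "IHP n" and l: "length cs = n" "length vs = n" and d: "distinct vs" and p: "pm cs"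
    and cs: "cs = X @ [a0, 0, b, c] @ Y" and vs: "vs = VX @ [i, k, l, j] @ VY" and lx: "length X = length VX"
    and x: "b \<notin> {1,-1}"
  shows "Real vs cs"
proof -
  define cs' where "cs' = X @ [a0 + b, c] @ Y"
  define vs' where "vs' = VX @ [i, j] @ VY"
  have "pm (X @ [a0, 0, b] @ (c # Y))" using p cs by simp
  from pm_zero[OF this] have p': "pm cs'" unfolding cs'_def by simp
  have d': "distinct vs'" "k \<notin> set vs'" using d unfolding vs vs'_def by auto
  have "Real vs' cs'" using IH p' d' l cs vs lx unfolding IHP_def cs'_def vs'_def by simp
  then obtain T' a' where T': "triangulation vs' T'" "squares_condition T' a'" "cs' = map (csum T' a') vs'"
    unfolding Real_def by blast
  define f where "f = csum T' a'"
  have X: "X = map f VX" "[a0 + b, c] = map f [i,j]" "Y = map f VY"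
    using map_split3[OF lx T'(3)[unfolded cs'_def vs'_def, folded f_def]] by simp_all
  define t1 where "t1 = {k,l,j}"
  define t2 where "t2 = {i,k,j}"
  have di: "i \<noteq> k" "i \<noteq> l" "i \<noteq> j" "k \<noteq> l" "k \<noteq> j" "l \<noteq> j" using d vs by auto
  have it: "t1 \<inter> t2 = {k,j}" unfolding t1_def t2_def using di by auto
  have wit: "l \<in> t1" "l \<notin> t2" unfolding t1_def t2_def using di by auto
  have tt: "t1 \<noteq> t2" "card (t1 \<inter> t2) = 2" "k \<in> t1" "k \<in> t2"
    using wit apply blast
    unfolding it using di apply simp
    by (simp_all add: t1_def t2_def)
  note ee = sq_ext[OF T'(1) d'(1) T'(2) d'(2) tt(3,4) tt(1,2) x]
  have tri1: "triangulation (VX @ i # k # j # VY) (insert t2 T')"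
    using ins_mid[OF T'(1), of VX i j VY k] unfolding vs'_def t2_def by simp
  have tri: "triangulation vs (insert t1 (insert t2 T'))"
    using ins_mid[OF tri1, of "VX @ [i]" k j VY l] unfolding vs t1_def by simp
  define g where "g = csum (insert t1 (insert t2 T')) (a'(t1 := b, t2 := -b))"
  have g: "g z = f z + (if z \<in> t1 then b else 0) + (if z \<in> t2 then -b else 0)" for z unfolding g_def f_def using ee(2) .
  have fw: "f k = 0" unfolding f_def by (rule csum_out[OF T'(1) d'])
  have fl: "f l = 0" unfolding f_def by (rule csum_out[OF T'(1) d'(1)]) (use d vs vs'_def in auto)
  have gX: "map g VX = map f VX" "map g VY = map f VY"
    using d unfolding vs g t1_def t2_def by (auto intro!: map_cong)
  have "cs = map g vs" unfolding cs vs using gX X g fw fl di by (simp add: t1_def t2_def)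
  thus ?thesis unfolding Real_def g_def using tri ee(1) by blast
qed

lemma sq2_mid:
  assumes IH: "IHP n" and l: "length cs = n" "length vs = n" and d: "distinct vs" and p: "pm cs"
    and cs: "cs = X @ [c, y, 0, dd] @ Y" and vs: "vs = VX @ [i, k, l, j] @ VY" and lx: "length X = length VX"
    and x: "y \<notin> {1,-1}"
  shows "Real vs cs"
proof -
  define cs' where "cs' = X @ [c, y + dd] @ Y"
  define vs' where "vs' = VX @ [i, j] @ VY"
  have "pm ((X @ [c]) @ [y, 0, dd] @ Y)" using p cs by simp
  from pm_zero[OF this] have p': "pm cs'" unfolding cs'_def by simp
  have d': "distinct vs'" "l \<notin> set vs'" using d unfolding vs vs'_def by auto
  have "Real vs' cs'" using IH p' d' l cs vs lx unfolding IHP_def cs'_def vs'_def by simp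
  then obtain T' a' where T': "triangulation vs' T'" "squares_condition T' a'" "cs' = map (csum T' a') vs'"
    unfolding Real_def by blast
  define f where "f = csum T' a'"
  have X: "X = map f VX" "[c, y + dd] = map f [i,j]" "Y = map f VY"
    using map_split3[OF lx T'(3)[unfolded cs'_def vs'_def, folded f_def]] by simp_all
  define t1 where "t1 = {i,k,l}"
  define t2 where "t2 = {i,l,j}"
  have di: "i \<noteq> k" "i \<noteq> l" "i \<noteq> j" "k \<noteq> l" "k \<noteq> j" "l \<noteq> j" using d vs by auto
  have it: "t1 \<inter> t2 = {i,l}" unfolding t1_def t2_def using di by auto
  have wit: "k \<in> t1" "k \<notin> t2" unfolding t1_def t2_def using di by auto
  have tt: "t1 \<noteq> t2" "card (t1 \<inter> t2) = 2" "l \<in> t1" "l \<in> t2"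
    using wit apply blast
    unfolding it using di apply simp
    by (simp_all add: t1_def t2_def)
  note ee = sq_ext[OF T'(1) d'(1) T'(2) d'(2) tt(3,4) tt(1,2) x]
  have tri1: "triangulation (VX @ i # l # j # VY) (insert t2 T')"
    using ins_mid[OF T'(1), of VX i j VY l] unfolding vs'_def t2_def by simp
  have tri: "triangulation vs (insert t1 (insert t2 T'))"
    using ins_mid[OF tri1, of VX i l "j # VY" k] unfolding vs t1_def by simp
  define g where "g = csum (insert t1 (insert t2 T')) (a'(t1 := y, t2 := -y))"
  have g: "g z = f z + (if z \<in> t1 then y else 0) + (if z \<in> t2 then -y else 0)" for z unfolding g_def f_def using ee(2) .
  have fw: "f l = 0" unfolding f_def by (rule csum_out[OF T'(1) d'])
  have fk: "f k = 0" unfolding f_def by (rule csum_out[OF T'(1) d'(1)]) (use d vs vs'_def in auto)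
  have gX: "map g VX = map f VX" "map g VY = map f VY"
    using d unfolding vs g t1_def t2_def by (auto intro!: map_cong)
  have "cs = map g vs" unfolding cs vs using gX X g fw fk di by (simp add: t1_def t2_def)
  thus ?thesis unfolding Real_def g_def using tri ee(1) by blast
qed

lemma sq_front:
  assumes IH: "IHP n" and l: "length cs = n" "length vs = n" and d: "distinct vs" and p: "pm cs"
    and cs: "cs = 0 # b # c # C @ [a0]" and vs: "vs = k # l # j # VC @ [i]" and lx: "length C = length VC"
    and x: "b \<notin> {1,-1}"
  shows "Real vs cs"
proof -
  define cs' where "cs' = c # C @ [a0 + b]"
  define vs' where "vs' = j # VC @ [i]"
  have "pm ([0, b] @ (c # C @ [a0]))" using p cs by simp
  from pm_rot[OF this] have "pm ((c # C) @ [a0, 0, b] @ [])" by simp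
  from pm_zero[OF this] have p': "pm cs'" unfolding cs'_def by simp
  have d': "distinct vs'" "k \<notin> set vs'" using d unfolding vs vs'_def by auto
  have "Real vs' cs'" using IH p' d' l cs vs lx unfolding IHP_def cs'_def vs'_def by simp
  then obtain T' a' where T': "triangulation vs' T'" "squares_condition T' a'" "cs' = map (csum T' a') vs'"
    unfolding Real_def by blast
  define f where "f = csum T' a'"
  have X: "c = f j" "C = map f VC" "a0 + b = f i"
    using T'(3)[unfolded cs'_def vs'_def, folded f_def] by simp_all
  define t1 where "t1 = {k,l,j}"
  define t2 where "t2 = {k,j,i}"
  have di: "i \<noteq> k" "i \<noteq> l" "i \<noteq> j" "k \<noteq> l" "k \<noteq> j" "l \<noteq> j" using d vs by auto
  have it: "t1 \<inter> t2 = {k,j}" unfolding t1_def t2_def using di by auto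
  have wit: "l \<in> t1" "l \<notin> t2" unfolding t1_def t2_def using di by auto
  have tt: "t1 \<noteq> t2" "card (t1 \<inter> t2) = 2" "k \<in> t1" "k \<in> t2"
    using wit apply blast
    unfolding it using di apply simp
    by (simp_all add: t1_def t2_def)
  note ee = sq_ext[OF T'(1) d'(1) T'(2) d'(2) tt(3,4) tt(1,2) x]
  have tri1: "triangulation (k # j # VC @ [i]) (insert t2 T')"
    using ins_front[OF T'(1), of k] unfolding vs'_def t2_def by simp
  have tri: "triangulation vs (insert t1 (insert t2 T'))"
    using ins_mid[OF tri1, of "[]" k j "VC @ [i]" l] unfolding vs t1_def by simp
  define g where "g = csum (insert t1 (insert t2 T')) (a'(t1 := b, t2 := -b))"
  have g: "g z = f z + (if z \<in> t1 then b else 0) + (if z \<in> t2 then -b else 0)" for z unfolding g_def f_def using ee(2) .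
  have fw: "f k = 0" unfolding f_def by (rule csum_out[OF T'(1) d'])
  have fl: "f l = 0" unfolding f_def by (rule csum_out[OF T'(1) d'(1)]) (use d vs vs'_def in auto)
  have gX: "map g VC = map f VC"
    using d unfolding vs g t1_def t2_def by (auto intro!: map_cong)
  have "cs = map g vs" unfolding cs vs using gX X g fw fl di by (simp add: t1_def t2_def)
  thus ?thesis unfolding Real_def g_def using tri ee(1) by blast
qed

lemma sq_back:
  assumes IH: "IHP n" and l: "length cs = n" "length vs = n" and d: "distinct vs" and p: "pm cs"
    and cs: "cs = dd # D @ [c, y, 0]" and vs: "vs = j # VD @ [i, k, l]" and lx: "length D = length VD"
    and x: "y \<notin> {1,-1}"
  shows "Real vs cs"
proof -
  define cs' where "cs' = (dd + y) # D @ [c]"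
  define vs' where "vs' = j # VD @ [i]"
  have "pm ((dd # D @ [c]) @ [y, 0])" using p cs by simp
  from pm_rot[OF this] have "pm ([] @ [y, 0, dd] @ (D @ [c]))" by simp
  from pm_zero[OF this] have p': "pm cs'" unfolding cs'_def by (simp add: add.commute)
  have d': "distinct vs'" "l \<notin> set vs'" using d unfolding vs vs'_def by auto
  have "Real vs' cs'" using IH p' d' l cs vs lx unfolding IHP_def cs'_def vs'_def by simp
  then obtain T' a' where T': "triangulation vs' T'" "squares_condition T' a'" "cs' = map (csum T' a') vs'"
    unfolding Real_def by blast
  define f where "f = csum T' a'"
  have X: "dd + y = f j" "D = map f VD" "c = f i"
    using T'(3)[unfolded cs'_def vs'_def, folded f_def] by simp_all
  define t1 where "t1 = {i,k,l}"
  define t2 where "t2 = {j,i,l}"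
  have di: "i \<noteq> k" "i \<noteq> l" "i \<noteq> j" "k \<noteq> l" "k \<noteq> j" "l \<noteq> j" using d vs by auto
  have it: "t1 \<inter> t2 = {i,l}" unfolding t1_def t2_def using di by auto
  have wit: "k \<in> t1" "k \<notin> t2" unfolding t1_def t2_def using di by auto
  have tt: "t1 \<noteq> t2" "card (t1 \<inter> t2) = 2" "l \<in> t1" "l \<in> t2"
    using wit apply blast
    unfolding it using di apply simp
    by (simp_all add: t1_def t2_def)
  note ee = sq_ext[OF T'(1) d'(1) T'(2) d'(2) tt(3,4) tt(1,2) x]
  have tri1: "triangulation (j # VD @ [i, l]) (insert t2 T')"
    using ins_back[OF T'(1), of l] unfolding vs'_def t2_def by simp
  have tri: "triangulation vs (insert t1 (insert t2 T'))"
    using ins_mid[OF tri1, of "j # VD" i l "[]" k] unfolding vs t1_def by simp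
  define g where "g = csum (insert t1 (insert t2 T')) (a'(t1 := y, t2 := -y))"
  have g: "g z = f z + (if z \<in> t1 then y else 0) + (if z \<in> t2 then -y else 0)" for z unfolding g_def f_def using ee(2) .
  have fw: "f l = 0" unfolding f_def by (rule csum_out[OF T'(1) d'])
  have fk: "f k = 0" unfolding f_def by (rule csum_out[OF T'(1) d'(1)]) (use d vs vs'_def in auto)
  have gX: "map g VD = map f VD"
    using d unfolding vs g t1_def t2_def by (auto intro!: map_cong)
  have "cs = map g vs" unfolding cs vs using gX X g fw fk di by (simp add: t1_def t2_def)
  thus ?thesis unfolding Real_def g_def using tri ee(1) by blast
qed

lemma win4: "k + 4 \<le> length xs \<Longrightarrow> xs = take k xs @ [xs!k, xs!(k+1), xs!(k+2), xs!(k+3)] @ drop (k+4) xs"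
proof -
  assume l: "k + 4 \<le> length xs"
  have "xs = take k xs @ [xs!k, xs!(k+1), xs!(k+2)] @ drop (k+3) xs" using win3[of k xs] l by simp
  moreover have "drop (k+3) xs = xs!(k+3) # drop (k+4) xs" using l Cons_nth_drop_Suc[of "k+3" xs]
    by (simp add: eval_nat_numeral)
  ultimately show ?thesis by simp
qed

lemma dec_f3: "3 \<le> length xs \<Longrightarrow> \<exists>x y M z. xs = x # y # M @ [z]"
proof (cases xs)
  case (Cons x r) assume "3 \<le> length xs"
  hence "\<exists>y r'. r = y # r' \<and> r' \<noteq> []" using Cons by (cases r) auto
  then obtain y r' where "r = y # r'" "r' \<noteq> []" by blast
  then obtain M z where "r' = M @ [z]" by (cases r' rule: rev_exhaust) auto
  thus ?thesis using Cons \<open>r = y # r'\<close> by auto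
qed simp

lemma dec_b3: "3 \<le> length xs \<Longrightarrow> \<exists>y M z x. xs = y # M @ [z, x]"
proof -
  assume "3 \<le> length xs"
  then obtain x y M z where "xs = x # y # M @ [z]" using dec_f3 by blast
  moreover obtain M' z' where "y # M = M' @ [z']" by (metis append_butlast_last_id list.distinct(1))
  ultimately show ?thesis by (intro exI[of _ x] exI[of _ M'] exI[of _ z'] exI[of _ z]) simp
qed

lemma dec_f4: "4 \<le> length xs \<Longrightarrow> \<exists>x y w M z. xs = x # y # w # M @ [z]"
proof (cases xs)
  case (Cons x r) assume "4 \<le> length xs"
  hence "3 \<le> length r" using Cons by simp
  then obtain y w M z where "r = y # w # M @ [z]" using dec_f3 by blast
  thus ?thesis using Cons by auto
qed simp

lemma dec_b4: "4 \<le> length xs \<Longrightarrow> \<exists>x M a b c. xs = x # M @ [a, b, c]"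
proof (cases xs)
  case (Cons x r) assume "4 \<le> length xs"
  hence "3 \<le> length r" using Cons by simp
  then obtain y M z w where "r = y # M @ [z, w]" using dec_b3 by blast
  moreover obtain M' z' where "y # M = M' @ [z']" by (metis append_butlast_last_id list.distinct(1))
  ultimately show ?thesis using Cons by (intro exI[of _ x] exI[of _ M'] exI[of _ z'] exI[of _ z] exI[of _ w]) simp
qed simp

lemma pm_single: "\<not> pm [x]"
  unfolding pm_def by (simp add: eta_M2 mat_M2 matrix_mul_rid)

lemma pm_two: "pm [c1, c2] \<Longrightarrow> c1 = 0 \<and> c2 = 0"
  unfolding pm_def by (auto simp: eta_M2 mat_M2 matrix_mul_rid)

lemma pm_three_zero: "pm [a, 0, b] \<Longrightarrow> False"
  using pm_zero[of "[]" a b "[]"] pm_single by simp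

lemma len2: "length xs = 2 \<Longrightarrow> \<exists>a b. xs = [a,b]"
  by (auto simp: length_Suc_conv numeral_2_eq_2)
lemma len3: "length xs = 3 \<Longrightarrow> \<exists>a b c. xs = [a,b,c]"
  by (auto simp: length_Suc_conv numeral_3_eq_3)

lemma main_b: "2 \<le> length cs \<Longrightarrow> pm cs \<Longrightarrow> distinct vs \<Longrightarrow> length vs = length cs \<Longrightarrow> Real vs cs"
proof (induction "length cs" arbitrary: cs vs rule: less_induct)
  case less
  define n where "n = length cs"
  have IH: "IHP n" unfolding IHP_def n_def using less.hyps by blast
  have l: "length cs = n" "length vs = n" using less.prems n_def by auto
  have d: "distinct vs" and p: "pm cs" using less.prems by auto
  show ?case
  proof (cases "n = 2")
    case True
    have "length cs = 2" "length vs = 2" using l True by auto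
    then obtain c1 c2 v1 v2 where cs: "cs = [c1,c2]" and vs: "vs = [v1,v2]" using len2[of cs] len2[of vs] by blast
    have c0: "c1 = 0" "c2 = 0" using pm_two p cs by auto
    have "squares_condition {} (\<lambda>_. 0)" unfolding squares_condition_def by (intro exI[of _ "{}"]) simp
    moreover have "cs = map (csum {} (\<lambda>_. 0)) vs" unfolding cs vs c0 csum_def by simp
    ultimately show ?thesis unfolding Real_def vs using triangulation.two by blast
  next
    case False
    hence n3: "3 \<le> n" using l less.prems by linarith
    show ?thesis
    proof (cases "\<exists>i<n. cs!i \<in> {1,-1}")
      case True
      then obtain i where i: "i < n" "cs!i \<in> {1,-1}" by blast
      consider (a) "i = 0" | (b) "i = n - 1" | (c) "0 < i" "i < n - 1" using i by linarith
      then show ?thesis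
      proof cases
        case a
        obtain x y M z where cs: "cs = x # y # M @ [z]" using dec_f3[of cs] l n3 by metis
        obtain x' y' M' z' where vs: "vs = x' # y' # M' @ [z']" using dec_f3[of vs] l n3 by metis
        have lm: "length M = length M'" using l cs vs by simp
        have e: "x \<in> {1,-1}" using i a cs by simp
        show ?thesis by (rule ear_front[OF IH l d p cs vs lm e])
      next
        case b
        obtain y M z x where cs: "cs = y # M @ [z, x]" using dec_b3[of cs] l n3 by metis
        obtain y' M' z' x' where vs: "vs = y' # M' @ [z', x']" using dec_b3[of vs] l n3 by metis
        have lm: "length M = length M'" using l cs vs by simp
        have "cs \<noteq> []" using cs by simp
        hence "cs ! (n - 1) = last cs" using l by (simp add: last_conv_nth)
        hence "cs ! (n - 1) = x" using cs by simp
        hence e: "x \<in> {1,-1}" using i b by simp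
        show ?thesis by (rule ear_back[OF IH l d p cs vs lm e])
      next
        case c
        define k where "k = i - 1"
        have kn: "k + 3 \<le> length cs" "k + 3 \<le> length vs" using c l k_def by auto
        have cs: "cs = take k cs @ [cs!k, cs!(k+1), cs!(k+2)] @ drop (k+3) cs" by (rule win3[OF kn(1)])
        have vs: "vs = take k vs @ [vs!k, vs!(k+1), vs!(k+2)] @ drop (k+3) vs" by (rule win3[OF kn(2)])
        have lm: "length (take k cs) = length (take k vs)" using l by simp
        have e: "cs!(k+1) \<in> {1,-1}" using i c k_def by simp
        show ?thesis by (rule ear_mid[OF IH l d p cs vs lm e])
      qed
    next
      case False
      hence no1: "\<forall>c\<in>set cs. c \<notin> {1,-1}" using l by (auto simp: in_set_conv_nth)
      have "cs \<noteq> []" using l n3 by auto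
      hence "\<not> (\<forall>c\<in>set cs. c \<notin> {-1,0,1})" using growth_pm p by blast
      hence "0 \<in> set cs" using no1 by auto
      then obtain z where z: "z < n" "cs!z = 0" using l by (auto simp: in_set_conv_nth)
      show ?thesis
      proof (cases "n = 3")
        case True
        have "length cs = 3" using l True by simp
        then obtain a b c where cs: "cs = [a,b,c]" using len3[of cs] by blast
        have "z = 0 \<or> z = 1 \<or> z = 2" using z True by auto
        moreover have False if "z = 0"
        proof -
          have "pm ([0,b] @ [c])" using p cs z that by simp
          from pm_rot[OF this] show False using pm_three_zero by simp
        qed
        moreover have False if "z = 1" using p cs z that pm_three_zero by simp
        moreover have False if "z = 2"
        proof -
          have "pm ([a] @ [b,0])" using p cs z that by simp
          from pm_rot[OF this] show False using pm_three_zero by simp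
        qed
        ultimately show ?thesis by blast
      next
        case False
        hence n4: "4 \<le> n" using n3 by simp
        consider (a) "z = 0" | (b) "z = n - 1" | (c) "1 \<le> z" "z + 3 \<le> n" | (q) "z = n - 2" using z n4 by linarith
        then show ?thesis
        proof cases
          case a
          obtain x y w M u where cs: "cs = x # y # w # M @ [u]" using dec_f4[of cs] l n4 by metis
          obtain x' y' w' M' u' where vs: "vs = x' # y' # w' # M' @ [u']" using dec_f4[of vs] l n4 by metis
          have lm: "length M = length M'" using l cs vs by simp
          have x0: "x = 0" using z a cs by simp
          have y: "y \<notin> {1,-1}" using no1 cs by simp
          show ?thesis by (rule sq_front[OF IH l d p cs[unfolded x0] vs lm y])
        next
          case b
          obtain x M a0 b0 c0 where cs: "cs = x # M @ [a0, b0, c0]" using dec_b4[of cs] l n4 by metis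
          obtain x' M' a' b' c' where vs: "vs = x' # M' @ [a', b', c']" using dec_b4[of vs] l n4 by metis
          have lm: "length M = length M'" using l cs vs by simp
          have "cs \<noteq> []" using cs by simp
          hence "cs ! (n - 1) = last cs" using l by (simp add: last_conv_nth)
          hence "cs ! (n - 1) = c0" using cs by simp
          hence c0: "c0 = 0" using z b by simp
          have y: "b0 \<notin> {1,-1}" using no1 cs by simp
          show ?thesis by (rule sq_back[OF IH l d p cs[unfolded c0] vs lm y])
        next
          case c
          define k where "k = z - 1"
          have kn: "k + 4 \<le> length cs" "k + 4 \<le> length vs" using c l k_def by auto
          have cs: "cs = take k cs @ [cs!k, cs!(k+1), cs!(k+2), cs!(k+3)] @ drop (k+4) cs" by (rule win4[OF kn(1)])
          have vs: "vs = take k vs @ [vs!k, vs!(k+1), vs!(k+2), vs!(k+3)] @ drop (k+4) vs" by (rule win4[OF kn(2)])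
          have lm: "length (take k cs) = length (take k vs)" using l by simp
          have z0: "cs!(k+1) = 0" using z c k_def by simp
          have y: "cs!(k+2) \<notin> {1,-1}" using no1 kn(1) nth_mem[of "k+2" cs] by auto
          show ?thesis by (rule sq1_mid[OF IH l d p cs[unfolded z0] vs lm y])
        next
          case q
          define k where "k = z - 2"
          have kn: "k + 4 \<le> length cs" "k + 4 \<le> length vs" using q n4 l k_def by auto
          have cs: "cs = take k cs @ [cs!k, cs!(k+1), cs!(k+2), cs!(k+3)] @ drop (k+4) cs" by (rule win4[OF kn(1)])
          have vs: "vs = take k vs @ [vs!k, vs!(k+1), vs!(k+2), vs!(k+3)] @ drop (k+4) vs" by (rule win4[OF kn(2)])
          have lm: "length (take k cs) = length (take k vs)" using l by simp
          have "k + 2 = z" using q n4 k_def by simp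
          hence z0: "cs!(k+2) = 0" using z by simp
          have y: "cs!(k+1) \<notin> {1,-1}" using no1 kn(1) nth_mem[of "k+1" cs] by auto
          show ?thesis by (rule sq2_mid[OF IH l d p cs[unfolded z0] vs lm y])
        qed
      qed
    qed
  qed
qed

lemma part_b:
  assumes q: "quiddity_cycle cs"
  shows "\<exists>T a. triangulation [1..<length cs + 1] T \<and> admissible T a \<and> cs = vertex_sums (length cs) T a"
proof -
  define n where "n = length cs"
  have pq: "prodm (map eta cs) = - mat 1" using q unfolding quiddity_cycle_def prodm_def .
  hence p: "pm cs" unfolding pm_def by simp
  have n2: "2 \<le> n"
  proof (rule ccontr)
    assume "\<not> 2 \<le> n"
    hence "cs = [] \<or> (\<exists>x. cs = [x])" unfolding n_def by (cases cs) (auto simp: Suc_le_eq)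
    thus False
    proof
      assume "cs = []" thus False using pq by (simp add: mat_M2)
    next
      assume "\<exists>x. cs = [x]" thus False using p pm_single by auto
    qed
  qed
  have "Real [1..<n+1] cs" using main_b[of cs "[1..<n+1]"] n2 p n_def by simp
  then obtain T a where T: "triangulation [1..<n+1] T" "squares_condition T a" "cs = map (csum T a) [1..<n+1]"
    unfolding Real_def by blast
  have vs: "cs = vertex_sums n T a" using T(3) vs_Om by simp
  obtain P where P: "good P a" "\<Union>P = {t\<in>T. a t \<notin> {1,-1}}" by (rule squares_good[OF T(2)])
  have d: "distinct [1..<n+1]" by simp
  have H1: "\<forall>t\<in>T. t \<notin> \<Union>P \<longrightarrow> a t \<in> {1,-1}" using P(2) by blast
  have cl: "\<forall>p\<in>P. p \<inter> T \<noteq> {} \<longrightarrow> p \<subseteq> T" using P(2) by blast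
  hence H3: "\<forall>p\<in>P. p \<inter> T \<noteq> {} \<longrightarrow> p \<subseteq> T \<or> (\<exists>r t'. p = {r,t'} \<and> r \<in> T \<and> hd [1..<n+1] \<in> r \<and> last [1..<n+1] \<in> r \<and> t' \<notin> T)"
    by blast
  have E: "even (WW T a)" "Om [1..<n+1] T a = mat (- Sg (WW T a))"
    using main_a[OF T(1) d P(1) H1 H3] cl by auto
  have "Om [1..<n+1] T a = prodm (map eta cs)" unfolding Om_def T(3) by (simp add: comp_def)
  hence "mat (- Sg (WW T a)) = (- mat 1 :: int^2^2)" using E(2) pq by simp
  hence "Sg (WW T a) = 1" unfolding mat_M2 by simp
  hence ev: "even (WW T a div 2)" unfolding Sg_def by (simp add: minus_one_power_iff split: if_splits)
  obtain q where W: "WW T a = 4 * q" using E(1) ev by (metis dvd_mult_div_cancel evenE mult.assoc numeral_Bit0 numeral_times_numeral num_double)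
  have fT: "finite T" using tri_basic[OF T(1) d] by simp
  have "label_d T a = of_int (2 * int q)"
  proof -
    have "2 * card {t\<in>T. a t < 0} + card {t\<in>T. a t = 0} = 4 * q" using W WW_card[OF fT] by simp
    hence "(of_nat (2 * card {t\<in>T. a t < 0} + card {t\<in>T. a t = 0}) :: rat) = of_nat (4 * q)" by simp
    thus ?thesis unfolding label_d_def by (simp add: field_simps)
  qed
  hence "admissible T a" unfolding admissible_def using T(2) by blast
  thus ?thesis using T(1) vs unfolding n_def by blast
qed

theorem theorem7p3:
  shows "(\<forall>m::nat. \<forall>T a. 2 \<le> m \<and> triangulation [1..<m+1] T \<and> admissible T a
            \<longrightarrow> quiddity_cycle (vertex_sums m T a))
       \<and> (\<forall>cs. quiddity_cycle cs \<longrightarrow>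
            (\<exists>T a. triangulation [1..<length cs + 1] T \<and> admissible T a
                   \<and> cs = vertex_sums (length cs) T a))"
  using part_a part_b by blast

end
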